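(* Assume (SD). Let $D:=\{u\in\mathcal H^2_{\frac1a}(0,1):\ au'\in H^1(0,1)\text{ and }u(x_0)=(au')(x_0)=0\}$. Then $D(\mathcal A_2)=\mathcal H^2_{\frac1a}(0,1)=D$.
   Context: (SD): there exists $x_0\in(0,1)$ with $a(x_0)=0$, $a>0$ on $[0,1]\setminus\{x_0\}$, $a\in W^{1,\infty}(0,1)$, and there exists $K\in[1,2)$ with $(x-x_0)a'(x)\le Ka(x)$ for a.e. $x\in[0,1]$. $L^2_{\frac1a}(0,1)=\{u\in L^2(0,1):\int_0^1u^2/a<\infty\}$, $\mathcal H^1_{\frac1a}(0,1)=L^2_{\frac1a}(0,1)\cap H^1_0(0,1)$, $\mathcal H^2_{\frac1a}(0,1)=\{u\in\mathcal H^1_{\frac1a}(0,1):u'\in H^1(0,1)\}$. The operator is $\mathcal A_2u=au''$ with domain $D(\mathcal A_2):=\mathcal H^2_{\frac1a}(0,1)$. *)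

theory Defs
  imports "HOL-Analysis.Analysis"
begin

text \<open>Functions on (0,1) are modelled as functions real \<Rightarrow> real; only their values on
  [0,1] matter.  Integrals are Lebesgue integrals over {0..1}.\<close>

definition L2 :: "(real \<Rightarrow> real) \<Rightarrow> bool" where
  "L2 u \<longleftrightarrow> set_borel_measurable lebesgue {0..1} u
      \<and> set_integrable lebesgue {0..1} (\<lambda>x. (u x)^2)"

definition Linf :: "(real \<Rightarrow> real) \<Rightarrow> bool" where
  "Linf u \<longleftrightarrow> set_borel_measurable lebesgue {0..1} u
      \<and> (\<exists>M. AE x in lebesgue. x \<in> {0..1} \<longrightarrow> \<bar>u x\<bar> \<le> M)"

definition test_fun :: "(real \<Rightarrow> real) \<Rightarrow> bool" where
  "test_fun \<phi> \<longleftrightarrow> (\<forall>n x. ((deriv ^^ n) \<phi>) differentiable (at x))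
      \<and> (\<exists>c d. 0 < c \<and> c \<le> d \<and> d < 1 \<and> (\<forall>x. x \<notin> {c..d} \<longrightarrow> \<phi> x = 0))"

definition weak_deriv :: "(real \<Rightarrow> real) \<Rightarrow> (real \<Rightarrow> real) \<Rightarrow> bool" where
  "weak_deriv u g \<longleftrightarrow> set_integrable lebesgue {0..1} u \<and> set_integrable lebesgue {0..1} g
      \<and> (\<forall>\<phi>. test_fun \<phi> \<longrightarrow>
           (LINT x:{0..1}|lebesgue. u x * deriv \<phi> x) = - (LINT x:{0..1}|lebesgue. g x * \<phi> x))"

text \<open>H^1(0,1), each class identified with its continuous representative on [0,1].\<close>
definition H1 :: "(real \<Rightarrow> real) \<Rightarrow> bool" where
  "H1 u \<longleftrightarrow> continuous_on {0..1} u \<and> L2 u \<and> (\<exists>g. L2 g \<and> weak_deriv u g)"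

definition H1_0 :: "(real \<Rightarrow> real) \<Rightarrow> bool" where
  "H1_0 u \<longleftrightarrow> H1 u \<and> u 0 = 0 \<and> u 1 = 0"

definition W1inf :: "(real \<Rightarrow> real) \<Rightarrow> bool" where
  "W1inf a \<longleftrightarrow> continuous_on {0..1} a \<and> Linf a \<and> (\<exists>g. Linf g \<and> weak_deriv a g)"

definition L2_w :: "(real \<Rightarrow> real) \<Rightarrow> (real \<Rightarrow> real) \<Rightarrow> bool" where
  "L2_w a u \<longleftrightarrow> L2 u \<and> set_integrable lebesgue {0..1} (\<lambda>x. (u x)^2 / a x)"

definition H1_w :: "(real \<Rightarrow> real) \<Rightarrow> (real \<Rightarrow> real) set" where
  "H1_w a = {u. L2_w a u \<and> H1_0 u}"

definition H2_w :: "(real \<Rightarrow> real) \<Rightarrow> (real \<Rightarrow> real) set" where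
  "H2_w a = {u. u \<in> H1_w a \<and> (\<exists>g. weak_deriv u g \<and> H1 g)}"

definition dom_A2 :: "(real \<Rightarrow> real) \<Rightarrow> (real \<Rightarrow> real) set" where
  "dom_A2 a = H2_w a"

definition SD :: "(real \<Rightarrow> real) \<Rightarrow> real \<Rightarrow> real \<Rightarrow> bool" where
  "SD a x0 K \<longleftrightarrow> 0 < x0 \<and> x0 < 1 \<and> a x0 = 0 \<and> (\<forall>x\<in>{0..1} - {x0}. a x > 0)
     \<and> W1inf a \<and> 1 \<le> K \<and> K < 2
     \<and> (\<exists>a'. weak_deriv a a' \<and> Linf a' \<and>
          (AE x in lebesgue. x \<in> {0..1} \<longrightarrow> (x - x0) * a' x \<le> K * a x))"

text \<open>The set D: (a u') \<in> H^1 (i.e. a times the weak derivative of u agrees a.e. with an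
  H^1 function h, taken continuous) and u(x0) = (a u')(x0) = 0.\<close>
definition D_set :: "(real \<Rightarrow> real) \<Rightarrow> real \<Rightarrow> (real \<Rightarrow> real) set" where
  "D_set a x0 = {u. u \<in> H2_w a \<and> u x0 = 0 \<and>
      (\<exists>g h. weak_deriv u g \<and> H1 h \<and> (AE x in lebesgue. x \<in> {0..1} \<longrightarrow> h x = a x * g x)
             \<and> h x0 = 0)}"

end

theory Submission
  imports Defs "HOL-Computational_Algebra.Polynomial"
begin

lemma sigma_finite_lebesgue: "sigma_finite_measure (lebesgue :: real measure)"
proof -
  have "sigma_finite_measure (completion (lborel :: real measure))"
  proof (unfold sigma_finite_measure_def, intro exI conjI)
    show "countable (range (\<lambda>n::nat. {-real n..real n}))" by simp
    show "range (\<lambda>n::nat. {-real n..real n}) \<subseteq> sets (completion lborel)" by auto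
    show "\<Union> (range (\<lambda>n::nat. {-real n..real n})) = space (completion lborel)"
      by (auto simp: real_arch_simple) (metis abs_le_iff minus_le_iff real_arch_simple abs_ge_self order_trans)
    show "\<forall>a\<in>range (\<lambda>n::nat. {- real n..real n}). emeasure (completion lborel) a \<noteq> \<infinity>" by auto
  qed
  then show ?thesis by simp
qed

interpretation lebesgue: sigma_finite_measure "lebesgue :: real measure"
  by (rule sigma_finite_lebesgue)

interpretation lebesgue_pair: pair_sigma_finite "lebesgue :: real measure" "lebesgue :: real measure" ..

lemma id_meas: "(\<lambda>x::real. x) \<in> borel_measurable lebesgue"
  by (simp add: measurable_completion)

lemma fst_meas[measurable]: "fst \<in> borel_measurable ((lebesgue :: real measure) \<Otimes>\<^sub>M (lebesgue :: real measure))"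
  using measurable_compose[OF measurable_fst[of "lebesgue::real measure" "lebesgue::real measure"] id_meas] by simp
lemma snd_meas[measurable]: "snd \<in> borel_measurable ((lebesgue :: real measure) \<Otimes>\<^sub>M (lebesgue :: real measure))"
  using measurable_compose[OF measurable_snd[of "lebesgue::real measure" "lebesgue::real measure"] id_meas] by simp

lemma tri_meas: "{p. snd p \<le> fst p} \<in> sets ((lebesgue :: real measure) \<Otimes>\<^sub>M (lebesgue :: real measure))"
proof -
  have "{p \<in> space (lebesgue \<Otimes>\<^sub>M lebesgue). snd p \<le> fst p} \<in> sets ((lebesgue :: real measure) \<Otimes>\<^sub>M (lebesgue :: real measure))"
    by measurable
  then show ?thesis by (simp add: space_pair_measure)
qed

lemma core_leb:
  fixes f g :: "real \<Rightarrow> real"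
  assumes fi: "integrable lebesgue (\<lambda>s. indicator {\<alpha>..\<beta>} s * f s)"
    and gi: "integrable lebesgue (\<lambda>s. indicator {\<alpha>..\<beta>} s * g s)"
  shows "(\<integral>s. indicator {\<alpha>..\<beta>} s * f s * (\<integral>t. indicator {\<alpha>..s} t * g t \<partial>lebesgue) \<partial>lebesgue)
       + (\<integral>t. indicator {\<alpha>..\<beta>} t * g t * (\<integral>s. indicator {\<alpha>..t} s * f s \<partial>lebesgue) \<partial>lebesgue)
       = (\<integral>s. indicator {\<alpha>..\<beta>} s * f s \<partial>lebesgue) * (\<integral>t. indicator {\<alpha>..\<beta>} t * g t \<partial>lebesgue)"
proof -
  define F where "F = (\<lambda>s. indicator {\<alpha>..\<beta>} s * f s)"
  define G where "G = (\<lambda>s. indicator {\<alpha>..\<beta>} s * g s)"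
  have Fi: "integrable lebesgue F" and Gi: "integrable lebesgue G" using fi gi by (simp_all add: F_def G_def)
  have [measurable]: "F \<in> borel_measurable lebesgue" "G \<in> borel_measurable lebesgue"
    using Fi Gi by auto
  define K where "K = (\<lambda>s t. F s * G t)"
  have Km[measurable]: "case_prod K \<in> borel_measurable (lebesgue \<Otimes>\<^sub>M lebesgue)"
    unfolding K_def by measurable
  have KI: "integrable (lebesgue \<Otimes>\<^sub>M lebesgue) (case_prod K)"
  proof (rule lebesgue_pair.Fubini_integrable[OF Km])
    show "integrable lebesgue (\<lambda>x. \<integral>y. norm (case_prod K (x, y)) \<partial>lebesgue)"
      by (simp add: K_def abs_mult Gi Fi integrable_abs)
    show "AE x in lebesgue. integrable lebesgue (\<lambda>y. case_prod K (x, y))"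
      by (simp add: K_def Gi)
  qed
  have T1: "{p. snd p \<le> fst p} \<in> sets ((lebesgue :: real measure) \<Otimes>\<^sub>M (lebesgue :: real measure))"
    by (rule tri_meas)
  have T2: "{p. fst p \<le> snd p} \<in> sets ((lebesgue :: real measure) \<Otimes>\<^sub>M (lebesgue :: real measure))"
  proof -
    have "{p \<in> space (lebesgue \<Otimes>\<^sub>M lebesgue). fst p \<le> snd p} \<in> sets ((lebesgue :: real measure) \<Otimes>\<^sub>M (lebesgue :: real measure))"
      by measurable
    then show ?thesis by (simp add: space_pair_measure)
  qed
  have T3: "{p. fst p = snd p} \<in> sets ((lebesgue :: real measure) \<Otimes>\<^sub>M (lebesgue :: real measure))"
  proof -
    have "{p \<in> space (lebesgue \<Otimes>\<^sub>M lebesgue). fst p = snd p} \<in> sets ((lebesgue :: real measure) \<Otimes>\<^sub>M (lebesgue :: real measure))"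
      by measurable
    then show ?thesis by (simp add: space_pair_measure)
  qed
  define K1 where "K1 = (\<lambda>s t. indicator {p. snd p \<le> fst p} (s,t) * K s t)"
  define K2 where "K2 = (\<lambda>s t. indicator {p. fst p \<le> snd p} (s,t) * K s t)"
  define K3 where "K3 = (\<lambda>s t. indicator {p. fst p = snd p} (s,t) * K s t)"
  have K1I: "integrable (lebesgue \<Otimes>\<^sub>M lebesgue) (case_prod K1)"
    using integrable_mult_indicator[OF T1 KI] unfolding K1_def by (simp add: case_prod_beta')
  have K2I: "integrable (lebesgue \<Otimes>\<^sub>M lebesgue) (case_prod K2)"
    using integrable_mult_indicator[OF T2 KI] unfolding K2_def by (simp add: case_prod_beta')
  have K3I: "integrable (lebesgue \<Otimes>\<^sub>M lebesgue) (case_prod K3)"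
    using integrable_mult_indicator[OF T3 KI] unfolding K3_def by (simp add: case_prod_beta')
  have split: "case_prod K = (\<lambda>p. case_prod K1 p + case_prod K2 p - case_prod K3 p)"
    by (auto simp: K1_def K2_def K3_def indicator_def fun_eq_iff)
  have "integral\<^sup>L (lebesgue \<Otimes>\<^sub>M lebesgue) (case_prod K)
     = integral\<^sup>L (lebesgue \<Otimes>\<^sub>M lebesgue) (case_prod K1) + integral\<^sup>L (lebesgue \<Otimes>\<^sub>M lebesgue) (case_prod K2)
       - integral\<^sup>L (lebesgue \<Otimes>\<^sub>M lebesgue) (case_prod K3)"
    unfolding split using K1I K2I K3I by simp
  moreover have "integral\<^sup>L (lebesgue \<Otimes>\<^sub>M lebesgue) (case_prod K) = (\<integral>s. F s \<partial>lebesgue) * (\<integral>t. G t \<partial>lebesgue)"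
    using lebesgue_pair.integral_fst[OF KI] by (simp add: K_def)
  moreover have "integral\<^sup>L (lebesgue \<Otimes>\<^sub>M lebesgue) (case_prod K1)
      = (\<integral>s. indicator {\<alpha>..\<beta>} s * f s * (\<integral>t. indicator {\<alpha>..s} t * g t \<partial>lebesgue) \<partial>lebesgue)"
  proof -
    have "integral\<^sup>L (lebesgue \<Otimes>\<^sub>M lebesgue) (case_prod K1) = (\<integral>s. (\<integral>t. K1 s t \<partial>lebesgue) \<partial>lebesgue)"
      using lebesgue_pair.integral_fst[OF K1I] by simp
    also have "\<dots> = (\<integral>s. indicator {\<alpha>..\<beta>} s * f s * (\<integral>t. indicator {\<alpha>..s} t * g t \<partial>lebesgue) \<partial>lebesgue)"
    proof (rule Bochner_Integration.integral_cong[OF refl])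
      fix s
      show "(\<integral>t. K1 s t \<partial>lebesgue) = indicator {\<alpha>..\<beta>} s * f s * (\<integral>t. indicator {\<alpha>..s} t * g t \<partial>lebesgue)"
      proof (cases "s \<in> {\<alpha>..\<beta>}")
        case True
        have "(\<lambda>t. K1 s t) = (\<lambda>t. F s * (indicator {\<alpha>..s} t * g t))"
          using True by (auto simp: K1_def K_def G_def indicator_def fun_eq_iff)
        then show ?thesis by (simp add: F_def)
      next
        case False
        then show ?thesis by (simp add: K1_def K_def F_def)
      qed
    qed
    finally show ?thesis .
  qed
  moreover have "integral\<^sup>L (lebesgue \<Otimes>\<^sub>M lebesgue) (case_prod K2)
      = (\<integral>t. indicator {\<alpha>..\<beta>} t * g t * (\<integral>s. indicator {\<alpha>..t} s * f s \<partial>lebesgue) \<partial>lebesgue)"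
  proof -
    have "integral\<^sup>L (lebesgue \<Otimes>\<^sub>M lebesgue) (case_prod K2) = (\<integral>t. (\<integral>s. K2 s t \<partial>lebesgue) \<partial>lebesgue)"
      using lebesgue_pair.integral_snd[OF K2I] by simp
    also have "\<dots> = (\<integral>t. indicator {\<alpha>..\<beta>} t * g t * (\<integral>s. indicator {\<alpha>..t} s * f s \<partial>lebesgue) \<partial>lebesgue)"
    proof (rule Bochner_Integration.integral_cong[OF refl])
      fix t
      show "(\<integral>s. K2 s t \<partial>lebesgue) = indicator {\<alpha>..\<beta>} t * g t * (\<integral>s. indicator {\<alpha>..t} s * f s \<partial>lebesgue)"
      proof (cases "t \<in> {\<alpha>..\<beta>}")
        case True
        have "(\<lambda>s. K2 s t) = (\<lambda>s. G t * (indicator {\<alpha>..t} s * f s))"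
          using True by (auto simp: K2_def K_def F_def indicator_def fun_eq_iff)
        then show ?thesis by (simp add: G_def mult.commute)
      next
        case False
        then show ?thesis by (simp add: K2_def K_def G_def)
      qed
    qed
    finally show ?thesis .
  qed
  moreover have "integral\<^sup>L (lebesgue \<Otimes>\<^sub>M lebesgue) (case_prod K3) = 0"
  proof -
    have "integral\<^sup>L (lebesgue \<Otimes>\<^sub>M lebesgue) (case_prod K3) = (\<integral>s. (\<integral>t. K3 s t \<partial>lebesgue) \<partial>lebesgue)"
      using lebesgue_pair.integral_fst[OF K3I] by simp
    also have "\<dots> = (\<integral>s. (0::real) \<partial>(lebesgue::real measure))"
    proof (rule Bochner_Integration.integral_cong[OF refl])
      fix s :: real
      have "AE t in (lebesgue :: real measure). t \<noteq> s"
        by (rule AE_completion) (rule AE_lborel_singleton)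
      then have "AE t in lebesgue. K3 s t = 0"
        by eventually_elim (simp add: K3_def)
      then show "(\<integral>t. K3 s t \<partial>lebesgue) = 0"
        by (simp add: integral_eq_zero_AE)
    qed
    finally show ?thesis by simp
  qed
  ultimately show ?thesis by (simp add: F_def G_def)
qed

lemma abs_int_cont_mult:
  fixes h f :: "real \<Rightarrow> real"
  assumes "continuous_on {a..b} h" "f absolutely_integrable_on {a..b}"
  shows "(\<lambda>x. h x * f x) absolutely_integrable_on {a..b}"
proof (rule absolutely_integrable_bounded_measurable_product_real)
  show "h \<in> borel_measurable (lebesgue_on {a..b})"
    using assms(1) by (simp add: continuous_imp_measurable_on_sets_lebesgue)
  show "bounded (h ` {a..b})"
    using assms(1) by (simp add: compact_continuous_image compact_imp_bounded)
qed (use assms in auto)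

lemma set_int_hk:
  fixes f :: "real \<Rightarrow> real"
  assumes "f absolutely_integrable_on S"
  shows "(\<integral>x. indicator S x * f x \<partial>lebesgue) = integral S f"
  using set_lebesgue_integral_eq_integral(2)[OF assms] by (simp add: set_lebesgue_integral_def)

lemma set_int_hk_int:
  fixes f :: "real \<Rightarrow> real"
  assumes "f absolutely_integrable_on S"
  shows "integrable lebesgue (\<lambda>x. indicator S x * f x)"
  using assms by (simp add: set_integrable_def)

lemma core_hk:
  fixes f g :: "real \<Rightarrow> real"
  assumes ab: "\<alpha> \<le> \<beta>" and f: "f absolutely_integrable_on {\<alpha>..\<beta>}" and g: "g absolutely_integrable_on {\<alpha>..\<beta>}"
  shows "integral {\<alpha>..\<beta>} (\<lambda>s. integral {\<alpha>..s} g * f s) + integral {\<alpha>..\<beta>} (\<lambda>t. integral {\<alpha>..t} f * g t)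
       = integral {\<alpha>..\<beta>} f * integral {\<alpha>..\<beta>} g"
proof -
  have fs: "f absolutely_integrable_on {\<alpha>..s}" if "s \<le> \<beta>" for s
    using absolutely_integrable_on_subinterval[OF f] that by auto
  have gs: "g absolutely_integrable_on {\<alpha>..s}" if "s \<le> \<beta>" for s
    using absolutely_integrable_on_subinterval[OF g] that by auto
  have cG: "continuous_on {\<alpha>..\<beta>} (\<lambda>s. integral {\<alpha>..s} g)"
    by (rule indefinite_integral_continuous_1) (use g set_lebesgue_integral_eq_integral(1) in blast)
  have cF: "continuous_on {\<alpha>..\<beta>} (\<lambda>s. integral {\<alpha>..s} f)"
    by (rule indefinite_integral_continuous_1) (use f set_lebesgue_integral_eq_integral(1) in blast)
  have p1: "(\<lambda>s. integral {\<alpha>..s} g * f s) absolutely_integrable_on {\<alpha>..\<beta>}"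
    by (rule abs_int_cont_mult[OF cG f])
  have p2: "(\<lambda>s. integral {\<alpha>..s} f * g s) absolutely_integrable_on {\<alpha>..\<beta>}"
    by (rule abs_int_cont_mult[OF cF g])
  have e1: "integral {\<alpha>..\<beta>} (\<lambda>s. integral {\<alpha>..s} g * f s)
      = (\<integral>s. indicator {\<alpha>..\<beta>} s * f s * (\<integral>t. indicator {\<alpha>..s} t * g t \<partial>lebesgue) \<partial>lebesgue)"
    unfolding set_int_hk[OF p1, symmetric]
  proof (rule Bochner_Integration.integral_cong[OF refl])
    fix s
    show "indicator {\<alpha>..\<beta>} s * (integral {\<alpha>..s} g * f s) =
         indicator {\<alpha>..\<beta>} s * f s * (\<integral>t. indicator {\<alpha>..s} t * g t \<partial>lebesgue)"
      by (cases "s \<in> {\<alpha>..\<beta>}") (auto simp: set_int_hk[OF gs])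
  qed
  have e2: "integral {\<alpha>..\<beta>} (\<lambda>t. integral {\<alpha>..t} f * g t)
      = (\<integral>t. indicator {\<alpha>..\<beta>} t * g t * (\<integral>s. indicator {\<alpha>..t} s * f s \<partial>lebesgue) \<partial>lebesgue)"
    unfolding set_int_hk[OF p2, symmetric]
  proof (rule Bochner_Integration.integral_cong[OF refl])
    fix t
    show "indicator {\<alpha>..\<beta>} t * (integral {\<alpha>..t} f * g t) =
         indicator {\<alpha>..\<beta>} t * g t * (\<integral>s. indicator {\<alpha>..t} s * f s \<partial>lebesgue)"
      by (cases "t \<in> {\<alpha>..\<beta>}") (auto simp: set_int_hk[OF fs])
  qed
  show ?thesis
    unfolding e1 e2 set_int_hk[OF f, symmetric] set_int_hk[OF g, symmetric]
    by (rule core_leb[OF set_int_hk_int[OF f] set_int_hk_int[OF g]])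
qed

definition AC :: "(real\<Rightarrow>real) \<Rightarrow> (real\<Rightarrow>real) \<Rightarrow> bool" where
  "AC F f \<longleftrightarrow> f absolutely_integrable_on {0..1} \<and> (\<forall>t\<in>{0..1}. F t = F 0 + integral {0..t} f)"


lemma absint_sub:
  fixes f :: "real \<Rightarrow> real"
  assumes "f absolutely_integrable_on {0..1}" "0 \<le> a" "b \<le> 1"
  shows "f integrable_on {a..b}"
proof -
  have "{a..b} \<subseteq> {0..1}" using assms by auto
  then have "f absolutely_integrable_on {a..b}" using absolutely_integrable_on_subinterval assms(1) by blast
  then show ?thesis using set_lebesgue_integral_eq_integral(1) by blast
qed

lemma AC_cont:
  assumes "AC F f" shows "continuous_on {0..1} F"
proof -
  have fi: "f integrable_on {0..1}"
    using assms absint_sub[of f 0 1] by (simp add: AC_def)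
  have "continuous_on {0..1} (\<lambda>t. F 0 + integral {0..t} f)"
    by (intro continuous_on_add continuous_on_const indefinite_integral_continuous_1 fi)
  then show ?thesis
    by (rule continuous_on_eq) (use assms in \<open>unfold AC_def, metis\<close>)
qed

lemma PR:
  assumes F: "AC F f" and G: "AC G g"
  shows "AC (\<lambda>t. F t * G t) (\<lambda>t. f t * G t + F t * g t)"
proof -
  have fa: "f absolutely_integrable_on {0..1}" and ga: "g absolutely_integrable_on {0..1}"
    using F G unfolding AC_def by blast+
  have cF: "continuous_on {0..1} F" and cG: "continuous_on {0..1} G"
    using F G by (auto intro: AC_cont)
  have i1: "(\<lambda>t. G t * f t) absolutely_integrable_on {0..1}" by (rule abs_int_cont_mult[OF cG fa])
  have i2: "(\<lambda>t. F t * g t) absolutely_integrable_on {0..1}" by (rule abs_int_cont_mult[OF cF ga])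
  have ia: "(\<lambda>t. f t * G t + F t * g t) absolutely_integrable_on {0..1}"
    using set_integral_add(1)[OF i1 i2] by (simp add: mult.commute)
  moreover have "F t * G t = F 0 * G 0 + integral {0..t} (\<lambda>t. f t * G t + F t * g t)" if t: "t \<in> {0..1}" for t
  proof -
    define If where "If s = integral {0..s} f" for s
    define Ig where "Ig s = integral {0..s} g" for s
    have ft: "f absolutely_integrable_on {0..t}" using absolutely_integrable_on_subinterval[OF fa] t by auto
    have gt: "g absolutely_integrable_on {0..t}" using absolutely_integrable_on_subinterval[OF ga] t by auto
    have fti: "f integrable_on {0..t}" and gti: "g integrable_on {0..t}"
      using ft gt set_lebesgue_integral_eq_integral(1) by blast+
    have cIf: "continuous_on {0..t} If" unfolding If_def by (rule indefinite_integral_continuous_1[OF fti])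
    have cIg: "continuous_on {0..t} Ig" unfolding Ig_def by (rule indefinite_integral_continuous_1[OF gti])
    have j1: "(\<lambda>s. Ig s * f s) integrable_on {0..t}"
      using abs_int_cont_mult[OF cIg ft] set_lebesgue_integral_eq_integral(1) by blast
    have j2: "(\<lambda>s. If s * g s) integrable_on {0..t}"
      using abs_int_cont_mult[OF cIf gt] set_lebesgue_integral_eq_integral(1) by blast
    have eq: "integral {0..t} (\<lambda>t. f t * G t + F t * g t)
        = integral {0..t} (\<lambda>s. G 0 * f s + Ig s * f s + (F 0 * g s + If s * g s))"
    proof (rule integral_cong)
      fix s assume "s \<in> {0..t}"
      then have "s \<in> {0..1}" using t by auto
      then have "F s = F 0 + If s" "G s = G 0 + Ig s" using F G unfolding AC_def If_def Ig_def by blast+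
      then show "f s * G s + F s * g s = G 0 * f s + Ig s * f s + (F 0 * g s + If s * g s)"
        by (simp add: algebra_simps)
    qed
    also have "\<dots> = G 0 * If t + integral {0..t} (\<lambda>s. Ig s * f s) + (F 0 * Ig t + integral {0..t} (\<lambda>s. If s * g s))"
    proof -
      have a1: "(\<lambda>s. G 0 * f s) integrable_on {0..t}" using integrable_on_cmult_left[OF fti] by simp
      have a2: "(\<lambda>s. F 0 * g s) integrable_on {0..t}" using integrable_on_cmult_left[OF gti] by simp
      have "integral {0..t} (\<lambda>s. G 0 * f s + Ig s * f s + (F 0 * g s + If s * g s))
          = integral {0..t} (\<lambda>s. G 0 * f s + Ig s * f s) + integral {0..t} (\<lambda>s. F 0 * g s + If s * g s)"
        by (rule integral_add; intro integrable_add a1 a2 j1 j2)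
      also have "\<dots> = (integral {0..t} (\<lambda>s. G 0 * f s) + integral {0..t} (\<lambda>s. Ig s * f s))
           + (integral {0..t} (\<lambda>s. F 0 * g s) + integral {0..t} (\<lambda>s. If s * g s))"
        by (simp only: integral_add[OF a1 j1] integral_add[OF a2 j2])
      finally show ?thesis by (simp only: integral_mult_right If_def Ig_def)
    qed
    also have "\<dots> = G 0 * If t + F 0 * Ig t + If t * Ig t"
    proof -
      have "integral {0..t} (\<lambda>s. Ig s * f s) + integral {0..t} (\<lambda>s. If s * g s) = If t * Ig t"
        using core_hk[of 0 t f g] ft gt t unfolding If_def Ig_def by simp
      then show ?thesis by linarith
    qed
    finally have calc: "integral {0..t} (\<lambda>t. f t * G t + F t * g t) = G 0 * If t + F 0 * Ig t + If t * Ig t" .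
    have "F t = F 0 + If t" "G t = G 0 + Ig t" using F G t unfolding AC_def If_def Ig_def by blast+
    then show ?thesis using calc by (simp add: algebra_simps)
  qed
  ultimately show ?thesis unfolding AC_def by blast
qed

lemma AC_C1:
  assumes d: "\<And>x. DERIV F x :> F' x" and c: "continuous_on {0..1} F'"
  shows "AC F F'"
  unfolding AC_def
proof (intro conjI ballI)
  show "F' absolutely_integrable_on {0..1}" by (rule absolutely_integrable_continuous_real[OF c])
  fix t :: real assume t: "t \<in> {0..1}"
  have "(F' has_integral (F t - F 0)) {0..t}"
    by (rule fundamental_theorem_of_calculus)
       (use t d in \<open>auto simp: has_real_derivative_iff_has_vector_derivative[symmetric] intro: has_field_derivative_at_within\<close>)
  then show "F t = F 0 + integral {0..t} F'" by (simp add: integral_unique)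
qed

lemma test_fun_props:
  assumes "test_fun \<phi>"
  shows "\<And>x. DERIV \<phi> x :> deriv \<phi> x" "continuous_on UNIV (deriv \<phi>)" "\<phi> 0 = 0" "\<phi> 1 = 0"
proof -
  have d0: "\<phi> differentiable (at x)" for x using assms unfolding test_fun_def
    by (metis funpow_0)
  have d1: "deriv \<phi> differentiable (at x)" for x using assms unfolding test_fun_def
    by (metis funpow_0 funpow_Suc_right o_apply)
  show "\<And>x. DERIV \<phi> x :> deriv \<phi> x" using d0 DERIV_deriv_iff_real_differentiable by blast
  show "continuous_on UNIV (deriv \<phi>)"
    using d1 by (simp add: continuous_at_imp_continuous_on differentiable_imp_continuous_within)
  obtain c d where "0 < c" "d < 1" "\<forall>x. x \<notin> {c..d} \<longrightarrow> \<phi> x = 0" using assms unfolding test_fun_def by blast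
  then show "\<phi> 0 = 0" "\<phi> 1 = 0" by auto
qed

lemma WD:
  assumes H: "AC H h"
  shows "weak_deriv H h"
  unfolding weak_deriv_def
proof (intro conjI allI impI)
  have cH: "continuous_on {0..1} H" by (rule AC_cont[OF H])
  show "set_integrable lebesgue {0..1} H" using absolutely_integrable_continuous_real[OF cH] .
  show ha: "set_integrable lebesgue {0..1} h" using H by (simp add: AC_def)
  fix \<phi> assume tf: "test_fun \<phi>"
  note P = test_fun_props[OF tf]
  have cP: "continuous_on {0..1} (deriv \<phi>)" using P(2) continuous_on_subset by blast
  have cp: "continuous_on {0..1} \<phi>"
    using P(1) by (meson DERIV_isCont continuous_at_imp_continuous_on)
  have A: "AC \<phi> (deriv \<phi>)" by (rule AC_C1[OF P(1) cP])
  have "AC (\<lambda>t. H t * \<phi> t) (\<lambda>t. h t * \<phi> t + H t * deriv \<phi> t)" by (rule PR[OF H A])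
  then have "H 1 * \<phi> 1 = H 0 * \<phi> 0 + integral {0..1} (\<lambda>t. h t * \<phi> t + H t * deriv \<phi> t)"
    unfolding AC_def by (metis atLeastAtMost_iff order_refl zero_le_one)
  then have z: "integral {0..1} (\<lambda>t. h t * \<phi> t + H t * deriv \<phi> t) = 0" using P(3,4) by simp
  have i1: "(\<lambda>t. \<phi> t * h t) absolutely_integrable_on {0..1}" by (rule abs_int_cont_mult[OF cp ha])
  have i2: "(\<lambda>t. H t * deriv \<phi> t) absolutely_integrable_on {0..1}"
    by (rule absolutely_integrable_continuous_real) (intro continuous_intros cH cP)
  have i1': "(\<lambda>t. h t * \<phi> t) absolutely_integrable_on {0..1}" using i1 by (simp add: mult.commute)
  have "integral {0..1} (\<lambda>t. h t * \<phi> t) + integral {0..1} (\<lambda>t. H t * deriv \<phi> t) = 0"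
    using z integral_add[OF set_lebesgue_integral_eq_integral(1)[OF i1'] set_lebesgue_integral_eq_integral(1)[OF i2]]
    by simp
  then show "(LINT x:{0..1}|lebesgue. H x * deriv \<phi> x) = - (LINT x:{0..1}|lebesgue. h x * \<phi> x)"
    using set_lebesgue_integral_eq_integral(2)[OF i1'] set_lebesgue_integral_eq_integral(2)[OF i2] by simp
qed

primrec Ck :: "nat \<Rightarrow> (real \<Rightarrow> real) \<Rightarrow> bool" where
  "Ck 0 f = True"
| "Ck (Suc k) f = (\<exists>f'. (\<forall>x. DERIV f x :> f' x) \<and> Ck k f')"

lemma Ck_mono: "Ck (Suc k) f \<Longrightarrow> Ck k f"
proof (induction k arbitrary: f)
  case 0 then show ?case by simp
next
  case (Suc k)
  then obtain f' where "\<forall>x. DERIV f x :> f' x" "Ck (Suc k) f'" by auto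
  then show ?case using Suc.IH by auto
qed

lemma Ck_const: "Ck k (\<lambda>x. c)"
proof (induction k arbitrary: c)
  case (Suc k) then show ?case by (auto intro!: exI[of _ "\<lambda>x. 0"])
qed simp

lemma Ck_add: "Ck k f \<Longrightarrow> Ck k g \<Longrightarrow> Ck k (\<lambda>x. f x + g x)"
proof (induction k arbitrary: f g)
  case (Suc k)
  then obtain f' g' where "\<forall>x. DERIV f x :> f' x" "Ck k f'" "\<forall>x. DERIV g x :> g' x" "Ck k g'" by auto
  then show ?case using Suc.IH by (auto intro!: exI[of _ "\<lambda>x. f' x + g' x"] derivative_eq_intros)
qed simp

lemma Ck_mult: "Ck k f \<Longrightarrow> Ck k g \<Longrightarrow> Ck k (\<lambda>x. f x * g x)"
proof (induction k arbitrary: f g)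
  case (Suc k)
  then obtain f' g' where d: "\<forall>x. DERIV f x :> f' x" "Ck k f'" "\<forall>x. DERIV g x :> g' x" "Ck k g'" by auto
  have "Ck k f" "Ck k g" using Suc.prems Ck_mono by auto
  then have "Ck k (\<lambda>x. f' x * g x + f x * g' x)"
    using Suc.IH d Ck_add by blast
  moreover have "\<forall>x. DERIV (\<lambda>x. f x * g x) x :> f' x * g x + f x * g' x"
    using d by (auto intro!: derivative_eq_intros)
  ultimately show ?case by auto
qed simp

lemma Ck_inverse: "Ck k f \<Longrightarrow> (\<And>x. f x \<noteq> 0) \<Longrightarrow> Ck k (\<lambda>x. inverse (f x))"
proof (induction k arbitrary: f)
  case (Suc k)
  then obtain f' where d: "\<forall>x. DERIV f x :> f' x" "Ck k f'" by auto
  have "Ck k f" using Suc.prems Ck_mono by auto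
  then have ci: "Ck k (\<lambda>x. inverse (f x))" using Suc.IH Suc.prems by blast
  have "Ck k (\<lambda>x. - f' x * (inverse (f x) * inverse (f x)))"
    using Ck_mult[OF Ck_mult[OF Ck_const[of k "-1"] d(2)] Ck_mult[OF ci ci]] by simp
  moreover have "\<forall>x. DERIV (\<lambda>x. inverse (f x)) x :> - f' x * (inverse (f x) * inverse (f x))"
    using d Suc.prems by (auto intro!: derivative_eq_intros simp: power2_eq_square)
  ultimately show ?case by auto
qed simp

lemma Ck_affine: "Ck k f \<Longrightarrow> Ck k (\<lambda>x. f (c * x + d))"
proof (induction k arbitrary: f)
  case (Suc k)
  then obtain f' where d: "\<forall>x. DERIV f x :> f' x" "Ck k f'" by auto
  have "Ck k (\<lambda>x. c * f' (c * x + d))" using Ck_mult[OF Ck_const Suc.IH[OF d(2)]] .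
  moreover have "\<forall>x. DERIV (\<lambda>x. f (c * x + d)) x :> c * f' (c * x + d)"
  proof
    fix x
    have "DERIV (\<lambda>x. c * x + d) x :> c" by (auto intro!: derivative_eq_intros)
    from DERIV_chain2[OF d(1)[rule_format] this] show "DERIV (\<lambda>x. f (c * x + d)) x :> c * f' (c * x + d)"
      by (simp add: mult.commute)
  qed
  ultimately show ?case by auto
qed simp

definition smooth :: "(real \<Rightarrow> real) \<Rightarrow> bool" where "smooth f \<longleftrightarrow> (\<forall>k. Ck k f)"

lemma smooth_deriv:
  assumes "smooth f" shows "DERIV f x :> deriv f x" "smooth (deriv f)"
proof -
  obtain f' where d: "\<forall>x. DERIV f x :> f' x" using assms unfolding smooth_def by (metis Ck.simps(2))
  then have e: "deriv f = f'" by (auto intro!: ext DERIV_imp_deriv)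
  show "DERIV f x :> deriv f x" using d e by simp
  show "smooth (deriv f)" unfolding smooth_def
  proof
    fix k
    obtain f2 where "\<forall>x. DERIV f x :> f2 x" "Ck k f2" using assms unfolding smooth_def by (metis Ck.simps(2))
    moreover then have "f2 = f'" using d by (auto intro!: ext DERIV_unique)
    ultimately show "Ck k (deriv f)" using e by simp
  qed
qed

lemma smooth_funpow: "smooth f \<Longrightarrow> (deriv ^^ n) f differentiable (at x)"
proof (induction n arbitrary: f)
  case 0 then show ?case using smooth_deriv(1) real_differentiable_def by auto
next
  case (Suc n)
  have "(deriv ^^ Suc n) f = (deriv ^^ n) (deriv f)" by (simp add: funpow_swap1)
  then show ?case using Suc.IH smooth_deriv(2)[OF Suc.prems] by simp
qed

definition hP :: "real poly \<Rightarrow> real \<Rightarrow> real" where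
  "hP P t = (if t > 0 then poly P (inverse t) * exp (- inverse t) else 0)"

definition nxt :: "real poly \<Rightarrow> real poly" where
  "nxt P = [:0,0,1:] * (P - pderiv P)"

lemma lim_poly_exp: "((\<lambda>y. poly R y * exp (-y)) \<longlongrightarrow> 0) at_top" for R :: "real poly"
proof -
  have "((\<lambda>y. \<Sum>i\<le>degree R. coeff R i * (y ^ i / exp y)) \<longlongrightarrow> (\<Sum>i\<le>degree R. coeff R i * 0)) at_top"
    by (intro tendsto_sum tendsto_mult tendsto_const tendsto_power_div_exp_0)
  moreover have "(\<Sum>i\<le>degree R. coeff R i * (y ^ i / exp y)) = poly R y * exp (-y)" for y
    by (simp add: poly_altdef sum_distrib_right exp_minus divide_inverse mult.assoc)
  ultimately show ?thesis by simp
qed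

lemma hP_deriv: "DERIV (hP P) t :> hP (nxt P) t"
proof (cases "t > 0")
  case True
  have d1: "DERIV (\<lambda>t. poly P (inverse t)) t :> poly (pderiv P) (inverse t) * (- (inverse t ^ Suc (Suc 0)))"
    using DERIV_chain2[OF poly_DERIV DERIV_inverse[of t UNIV]] True by simp
  have d2: "DERIV (\<lambda>t. exp (- inverse t)) t :> exp (- inverse t) * (inverse t ^ Suc (Suc 0))"
    using DERIV_chain2[OF DERIV_exp DERIV_minus[OF DERIV_inverse[of t UNIV]]] True by simp
  have d3: "DERIV (\<lambda>t. poly P (inverse t) * exp (- inverse t)) t :>
     poly (pderiv P) (inverse t) * (- (inverse t ^ Suc (Suc 0))) * exp (- inverse t)
      + exp (- inverse t) * (inverse t ^ Suc (Suc 0)) * poly P (inverse t)"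
    using DERIV_mult[OF d1 d2] by simp
  have eq: "poly (pderiv P) (inverse t) * (- (inverse t ^ Suc (Suc 0))) * exp (- inverse t)
      + exp (- inverse t) * (inverse t ^ Suc (Suc 0)) * poly P (inverse t) = hP (nxt P) t"
    using True by (simp add: hP_def nxt_def algebra_simps power2_eq_square)
  have "DERIV (hP P) t :> hP (nxt P) t"
    by (rule has_field_derivative_transform_within_open[OF d3[unfolded eq], of "{0<..}"])
       (use True in \<open>auto simp: hP_def\<close>)
  then show ?thesis .
next
  case False
  show ?thesis
  proof (cases "t < 0")
    case True
    have "DERIV (\<lambda>t. 0) t :> 0" by simp
    then have "DERIV (hP P) t :> 0"
      by (rule has_field_derivative_transform_within_open[of _ _ _ "{..<0}"]) (use True in \<open>auto simp: hP_def\<close>)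
    then show ?thesis using False by (simp add: hP_def)
  next
    case False
    with \<open>\<not> t > 0\<close> have t0: "t = 0" by simp
    have "((\<lambda>h. (hP P (0 + h) - hP P 0) / h) \<longlongrightarrow> 0) (at 0)"
    proof (rule filterlim_split_at)
      have "eventually (\<lambda>h::real. h < 0) (at_left 0)" by (simp add: eventually_at_filter)
      then have "eventually (\<lambda>h. 0 = (hP P (0 + h) - hP P 0) / h) (at_left 0)"
        by eventually_elim (simp add: hP_def)
      then show "((\<lambda>h. (hP P (0 + h) - hP P 0) / h) \<longlongrightarrow> 0) (at_left 0)"
        by (rule Lim_transform_eventually[OF tendsto_const])
      have L: "((\<lambda>y. poly ([:0,1:] * P) y * exp (-y)) \<longlongrightarrow> 0) at_top" by (rule lim_poly_exp)
      have "eventually (\<lambda>y::real. y > 0) at_top" by (rule eventually_gt_at_top)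
      then have "eventually (\<lambda>y. poly ([:0,1:] * P) y * exp (-y) = (hP P (0 + inverse y) - hP P 0) / inverse y) at_top"
        by eventually_elim (simp add: hP_def divide_inverse)
      then have "((\<lambda>y. (hP P (0 + inverse y) - hP P 0) / inverse y) \<longlongrightarrow> 0) at_top"
        by (rule Lim_transform_eventually[OF L])
      then show "((\<lambda>h. (hP P (0 + h) - hP P 0) / h) \<longlongrightarrow> 0) (at_right 0)"
        unfolding filterlim_at_right_to_top .
    qed
    then have "DERIV (hP P) 0 :> 0" unfolding DERIV_def .
    then show ?thesis using t0 by (simp add: hP_def)
  qed
qed

lemma hP_Ck: "Ck k (hP P)"
proof (induction k arbitrary: P)
  case (Suc k)
  then show ?case using hP_deriv by auto
qed simp

definition f0 :: "real \<Rightarrow> real" where "f0 = hP 1"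
definition f0' :: "real \<Rightarrow> real" where "f0' = hP (nxt 1)"

lemma f0_smooth: "smooth f0" unfolding smooth_def f0_def using hP_Ck by blast
lemma f0_deriv: "DERIV f0 t :> f0' t" unfolding f0_def f0'_def by (rule hP_deriv)
lemma f0_pos: "t > 0 \<Longrightarrow> f0 t > 0" by (simp add: f0_def hP_def)
lemma f0_zero: "t \<le> 0 \<Longrightarrow> f0 t = 0" by (simp add: f0_def hP_def)
lemma f0_nonneg: "f0 t \<ge> 0" by (simp add: f0_def hP_def)
lemma f0'_zero: "t \<le> 0 \<Longrightarrow> f0' t = 0" by (simp add: f0'_def hP_def)
lemma f0'_nonneg: "f0' t \<ge> 0" by (simp add: f0'_def hP_def nxt_def)

definition Dn :: "real \<Rightarrow> real" where "Dn t = f0 t + f0 (1 - t)"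
definition Rs :: "real \<Rightarrow> real" where "Rs t = f0 t * inverse (Dn t)"
definition Rd :: "real \<Rightarrow> real" where "Rd t = (f0' t * f0 (1 - t) + f0 t * f0' (1 - t)) / (Dn t)^2"

lemma Dn_pos: "Dn t > 0"
proof (cases "t > 0")
  case True then show ?thesis using f0_pos[of t] f0_nonneg[of "1-t"] by (simp add: Dn_def)
next
  case False then show ?thesis using f0_pos[of "1-t"] f0_nonneg[of t] by (simp add: Dn_def)
qed

lemma Rs_smooth: "smooth Rs"
  unfolding smooth_def
proof
  fix k
  have a: "Ck k f0" using f0_smooth smooth_def by blast
  have b: "Ck k (\<lambda>t. f0 (1 - t))" using Ck_affine[OF a, of "-1" 1] by simp
  have c: "Ck k Dn" unfolding Dn_def by (rule Ck_add[OF a b])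
  have "Ck k (\<lambda>t. inverse (Dn t))" by (rule Ck_inverse[OF c]) (use Dn_pos in \<open>simp add: less_imp_neq[symmetric]\<close>)
  then have "Ck k (\<lambda>t. f0 t * inverse (Dn t))" by (rule Ck_mult[OF a])
  then show "Ck k Rs" by (simp add: Rs_def[abs_def])
qed

lemma Rs_deriv: "DERIV Rs t :> Rd t"
proof -
  have d1: "DERIV (\<lambda>t. f0 (1 - t)) t :> f0' (1 - t) * (- 1)"
    by (rule DERIV_chain2[OF f0_deriv]) (auto intro!: derivative_eq_intros)
  have dD: "DERIV Dn t :> f0' t + f0' (1 - t) * (- 1)"
    unfolding Dn_def[abs_def] by (rule DERIV_add[OF f0_deriv d1])
  have dI: "DERIV (\<lambda>t. inverse (Dn t)) t :> - (inverse (Dn t) * (f0' t + f0' (1 - t) * (- 1)) * inverse (Dn t))"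
    by (rule DERIV_inverse'[OF dD]) (use Dn_pos[of t] in simp)
  have "DERIV (\<lambda>t. f0 t * inverse (Dn t)) t :>
      f0' t * inverse (Dn t) + (- (inverse (Dn t) * (f0' t + f0' (1 - t) * (- 1)) * inverse (Dn t))) * f0 t"
    by (rule DERIV_mult[OF f0_deriv dI])
  moreover have "f0' t * inverse (Dn t) + (- (inverse (Dn t) * (f0' t + f0' (1 - t) * (- 1)) * inverse (Dn t))) * f0 t = Rd t"
  proof -
    have gen0: "a' * inverse D + (- (inverse D * (a' + b' * (- 1)) * inverse D)) * a
        = (a' * (D - a) + a * b') / D^2" if "D \<noteq> 0" for D a a' b' :: real
      using that by (simp add: field_simps power2_eq_square)
    have gen: "a' * inverse (a + b) + (- (inverse (a + b) * (a' + b' * (- 1)) * inverse (a + b))) * a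
        = (a' * b + a * b') / (a + b)^2" if "a + b \<noteq> 0" for a b a' b' :: real
      using gen0[where D="a + b" and a=a and a'=a' and b'=b'] that by simp
    show ?thesis using gen[of "f0 t" "f0 (1 - t)" "f0' t" "f0' (1 - t)"] Dn_pos[of t]
      by (simp add: Rd_def Dn_def)
  qed
  ultimately show ?thesis by (simp add: Rs_def[abs_def])
qed

lemma Rs_zero: "t \<le> 0 \<Longrightarrow> Rs t = 0" by (simp add: Rs_def f0_zero)
lemma Rs_one: "t \<ge> 1 \<Longrightarrow> Rs t = 1"
  using f0_pos[of t] f0_zero[of "1-t"] by (simp add: Rs_def Dn_def)
lemma Rs_nonneg: "Rs t \<ge> 0" using f0_nonneg[of t] Dn_pos[of t] by (simp add: Rs_def)
lemma Rs_le1: "Rs t \<le> 1"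
  using f0_nonneg[of t] f0_nonneg[of "1-t"] Dn_pos[of t] by (simp add: Rs_def Dn_def field_simps)
lemma Rd_nonneg: "Rd t \<ge> 0"
  using f0_nonneg[of t] f0_nonneg[of "1-t"] f0'_nonneg[of t] f0'_nonneg[of "1-t"] by (simp add: Rd_def)
lemma Rd_zero: "t \<le> 0 \<or> t \<ge> 1 \<Longrightarrow> Rd t = 0"
  using f0_zero[of t] f0'_zero[of t] f0_zero[of "1-t"] f0'_zero[of "1-t"] by (auto simp: Rd_def)
lemma Rs_mono: "s \<le> t \<Longrightarrow> Rs s \<le> Rs t"
  by (rule DERIV_nonneg_imp_nondecreasing[of s t Rs]) (use Rs_deriv Rd_nonneg in blast)+
lemma Rd_cont: "isCont Rd t"
proof -
  have "deriv Rs = Rd" using Rs_deriv by (auto intro!: ext DERIV_imp_deriv)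
  then have "DERIV Rd t :> deriv Rd t" using smooth_deriv[OF smooth_deriv(2)[OF Rs_smooth]] by metis
  then show ?thesis by (rule DERIV_isCont)
qed

lemma Rs_aff_deriv: "\<epsilon> > 0 \<Longrightarrow> DERIV (\<lambda>t. Rs ((t - z) / \<epsilon>)) t :> Rd ((t - z) / \<epsilon>) / \<epsilon>"
proof -
  assume e: "\<epsilon> > 0"
  have "DERIV (\<lambda>t. (t - z) / \<epsilon>) t :> 1 / \<epsilon>" using e by (auto intro!: derivative_eq_intros)
  from DERIV_chain2[OF Rs_deriv this] show ?thesis by simp
qed

lemma Rd_aff_zero: "\<epsilon> > 0 \<Longrightarrow> t \<notin> {z..z+\<epsilon>} \<Longrightarrow> Rd ((t - z) / \<epsilon>) / \<epsilon> = 0"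
proof -
  assume e: "\<epsilon> > 0" and t: "t \<notin> {z..z+\<epsilon>}"
  have "(t - z) / \<epsilon> \<le> 0 \<or> (t - z) / \<epsilon> \<ge> 1"
  proof (cases "t < z")
    case True then show ?thesis using e by (simp add: divide_le_0_iff)
  next
    case False then have "t > z + \<epsilon>" using t by auto
    then show ?thesis using e by (simp add: le_divide_eq)
  qed
  then show ?thesis by (simp add: Rd_zero)
qed

lemma Rd_aff_cont: "\<epsilon> > 0 \<Longrightarrow> continuous_on S (\<lambda>t. Rd ((t - z) / \<epsilon>) / \<epsilon>)"
proof -
  assume "\<epsilon> > 0"
  have c: "continuous_on UNIV Rd" by (simp add: continuous_at_imp_continuous_on Rd_cont)
  have "continuous_on S (\<lambda>t. Rd ((t - z) / \<epsilon>))"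
    by (rule continuous_on_compose2[OF c]) (use \<open>\<epsilon> > 0\<close> in \<open>auto intro!: continuous_intros\<close>)
  then show ?thesis using \<open>\<epsilon> > 0\<close> by (intro continuous_intros) auto
qed

lemma Rd_aff_int: "\<epsilon> > 0 \<Longrightarrow> ((\<lambda>t. Rd ((t - z) / \<epsilon>) / \<epsilon>) has_integral 1) {z..z+\<epsilon>}"
proof -
  assume e: "\<epsilon> > 0"
  have "((\<lambda>t. Rd ((t - z) / \<epsilon>) / \<epsilon>) has_integral (Rs ((z + \<epsilon> - z) / \<epsilon>) - Rs ((z - z) / \<epsilon>))) {z..z+\<epsilon>}"
    by (rule fundamental_theorem_of_calculus)
       (use e Rs_aff_deriv in \<open>auto simp: has_real_derivative_iff_has_vector_derivative[symmetric] intro: has_field_derivative_at_within\<close>)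
  then show ?thesis using e by (simp add: Rs_one Rs_zero)
qed

lemma moll_bound:
  fixes u :: "real \<Rightarrow> real"
  assumes cu: "continuous_on {0..1} u" and e: "\<epsilon> > 0" and z: "0 \<le> z" "z + \<epsilon> \<le> 1"
    and eta: "\<And>t. t \<in> {z..z+\<epsilon>} \<Longrightarrow> \<bar>u t - u z\<bar> \<le> \<eta>"
  shows "\<bar>integral {0..1} (\<lambda>t. u t * (Rd ((t - z) / \<epsilon>) / \<epsilon>)) - u z\<bar> \<le> \<eta>"
proof -
  define k where "k t = Rd ((t - z) / \<epsilon>) / \<epsilon>" for t
  have kc: "continuous_on S k" for S unfolding k_def by (rule Rd_aff_cont[OF e])
  have k0: "t \<notin> {z..z+\<epsilon>} \<Longrightarrow> k t = 0" for t unfolding k_def using Rd_aff_zero[OF e] by blast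
  have kn: "k t \<ge> 0" for t unfolding k_def using Rd_nonneg e by simp
  have k1: "(k has_integral 1) {z..z+\<epsilon>}" unfolding k_def by (rule Rd_aff_int[OF e])
  have sub: "{z..z+\<epsilon>} \<subseteq> {0..1}" using z by auto
  have cuz: "continuous_on {z..z+\<epsilon>} u" using continuous_on_subset[OF cu sub] .
  have ik: "(\<lambda>t. u t * k t) integrable_on {z..z+\<epsilon>}"
    by (rule integrable_continuous_real) (intro continuous_intros cuz kc)
  have "((\<lambda>t. u t * k t) has_integral integral {z..z+\<epsilon>} (\<lambda>t. u t * k t)) {0..1}"
    by (rule has_integral_on_superset[OF integrable_integral[OF ik] _ sub]) (simp add: k0)
  then have e1: "integral {0..1} (\<lambda>t. u t * k t) = integral {z..z+\<epsilon>} (\<lambda>t. u t * k t)"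
    by (simp add: integral_unique)
  have ki: "k integrable_on {z..z+\<epsilon>}" using k1 by blast
  have kint: "integral {z..z+\<epsilon>} k = 1" using k1 by (simp add: integral_unique)
  have iuz: "(\<lambda>t. u z * k t) integrable_on {z..z+\<epsilon>}" using integrable_on_cmult_left[OF ki] by simp
  have e2: "integral {z..z+\<epsilon>} (\<lambda>t. u t * k t) - u z = integral {z..z+\<epsilon>} (\<lambda>t. (u t - u z) * k t)"
  proof -
    have "integral {z..z+\<epsilon>} (\<lambda>t. (u t - u z) * k t) = integral {z..z+\<epsilon>} (\<lambda>t. u t * k t - u z * k t)"
      by (simp add: algebra_simps)
    also have "\<dots> = integral {z..z+\<epsilon>} (\<lambda>t. u t * k t) - integral {z..z+\<epsilon>} (\<lambda>t. u z * k t)"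
      by (rule integral_diff[OF ik iuz])
    also have "\<dots> = integral {z..z+\<epsilon>} (\<lambda>t. u t * k t) - u z" using kint by simp
    finally show ?thesis by simp
  qed
  have "norm (integral {z..z+\<epsilon>} (\<lambda>t. (u t - u z) * k t)) \<le> integral {z..z+\<epsilon>} (\<lambda>t. \<eta> * k t)"
  proof (rule Henstock_Kurzweil_Integration.integral_norm_bound_integral)
    show "(\<lambda>t. (u t - u z) * k t) integrable_on {z..z+\<epsilon>}"
      by (rule integrable_continuous_real) (intro continuous_intros cuz kc)
    show "(\<lambda>t. \<eta> * k t) integrable_on {z..z+\<epsilon>}" using integrable_on_cmult_left[OF ki] by simp
    fix t assume "t \<in> {z..z+\<epsilon>}"
    then show "norm ((u t - u z) * k t) \<le> \<eta> * k t"
      using eta kn[of t] by (simp add: abs_mult mult_right_mono)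
  qed
  also have "\<dots> = \<eta>" using kint by simp
  finally have "\<bar>integral {0..1} (\<lambda>t. u t * k t) - u z\<bar> \<le> \<eta>" using e1 e2 by simp
  then show ?thesis by (simp only: k_def)
qed

definition phi :: "real \<Rightarrow> real \<Rightarrow> real \<Rightarrow> real \<Rightarrow> real" where
  "phi x y \<epsilon> t = Rs ((t - x) / \<epsilon>) - Rs ((t - y) / \<epsilon>)"

lemma Ck_Rs_aff: "\<epsilon> > 0 \<Longrightarrow> Ck k (\<lambda>t. Rs ((t - x) / \<epsilon>))"
proof -
  assume e: "\<epsilon> > 0"
  have "Ck k Rs" using Rs_smooth smooth_def by blast
  from Ck_affine[OF this, of "1/\<epsilon>" "- x / \<epsilon>"]
  have "Ck k (\<lambda>t. Rs (1 / \<epsilon> * t + - x / \<epsilon>))" .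
  moreover have "(\<lambda>t. Rs (1 / \<epsilon> * t + - x / \<epsilon>)) = (\<lambda>t. Rs ((t - x) / \<epsilon>))"
    by (rule ext) (simp add: diff_divide_distrib)
  ultimately show ?thesis by simp
qed

lemma phi_smooth: "\<epsilon> > 0 \<Longrightarrow> smooth (phi x y \<epsilon>)"
  unfolding smooth_def
proof
  fix k assume e: "\<epsilon> > 0"
  have "Ck k (\<lambda>t. Rs ((t - x) / \<epsilon>) + (-1) * Rs ((t - y) / \<epsilon>))"
    by (rule Ck_add[OF Ck_Rs_aff[OF e] Ck_mult[OF Ck_const Ck_Rs_aff[OF e]]])
  then show "Ck k (phi x y \<epsilon>)" by (simp add: phi_def[abs_def])
qed

lemma phi_zero: "\<epsilon> > 0 \<Longrightarrow> x \<le> y \<Longrightarrow> t \<le> x \<or> t \<ge> y + \<epsilon> \<Longrightarrow> phi x y \<epsilon> t = 0"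
proof -
  assume e: "\<epsilon> > 0" and xy: "x \<le> y" and t: "t \<le> x \<or> t \<ge> y + \<epsilon>"
  show ?thesis
  proof (cases "t \<le> x")
    case True
    then have "(t - x) / \<epsilon> \<le> 0" "(t - y) / \<epsilon> \<le> 0" using e xy by (auto simp: divide_le_0_iff)
    then show ?thesis by (simp add: phi_def Rs_zero)
  next
    case False
    then have "t \<ge> y + \<epsilon>" using t by auto
    then have "(t - x) / \<epsilon> \<ge> 1" "(t - y) / \<epsilon> \<ge> 1" using e xy by (auto simp: le_divide_eq)
    then show ?thesis by (simp add: phi_def Rs_one)
  qed
qed

lemma phi_one: "\<epsilon> > 0 \<Longrightarrow> x + \<epsilon> \<le> t \<Longrightarrow> t \<le> y \<Longrightarrow> phi x y \<epsilon> t = 1"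
proof -
  assume e: "\<epsilon> > 0" and t: "x + \<epsilon> \<le> t" "t \<le> y"
  then have "(t - x) / \<epsilon> \<ge> 1" "(t - y) / \<epsilon> \<le> 0" using e by (auto simp: le_divide_eq divide_le_0_iff)
  then show ?thesis by (simp add: phi_def Rs_one Rs_zero)
qed

lemma phi_bounds: "\<epsilon> > 0 \<Longrightarrow> x \<le> y \<Longrightarrow> 0 \<le> phi x y \<epsilon> t \<and> phi x y \<epsilon> t \<le> 1"
proof -
  assume e: "\<epsilon> > 0" and xy: "x \<le> y"
  have "(t - y) / \<epsilon> \<le> (t - x) / \<epsilon>" using e xy by (simp add: divide_right_mono)
  then have "Rs ((t - y) / \<epsilon>) \<le> Rs ((t - x) / \<epsilon>)" by (rule Rs_mono)
  then show ?thesis using Rs_nonneg Rs_le1 by (simp add: phi_def) (smt (verit) Rs_le1 Rs_nonneg)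
qed

lemma phi_deriv: "\<epsilon> > 0 \<Longrightarrow> DERIV (phi x y \<epsilon>) t :> Rd ((t - x) / \<epsilon>) / \<epsilon> - Rd ((t - y) / \<epsilon>) / \<epsilon>"
  unfolding phi_def[abs_def] by (intro DERIV_diff Rs_aff_deriv)

lemma phi_test: "\<epsilon> > 0 \<Longrightarrow> 0 < x \<Longrightarrow> x \<le> y \<Longrightarrow> y + \<epsilon> < 1 \<Longrightarrow> test_fun (phi x y \<epsilon>)"
  unfolding test_fun_def
proof (intro conjI allI)
  assume e: "\<epsilon> > 0" and x: "0 < x" and xy: "x \<le> y" and y: "y + \<epsilon> < 1"
  show "(deriv ^^ n) (phi x y \<epsilon>) differentiable at t" for n t by (rule smooth_funpow[OF phi_smooth[OF e]])
  show "\<exists>c d. 0 < c \<and> c \<le> d \<and> d < 1 \<and> (\<forall>t. t \<notin> {c..d} \<longrightarrow> phi x y \<epsilon> t = 0)"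
    using e x xy y by (intro exI[of _ x] exI[of _ "y + \<epsilon>"]) (auto intro!: phi_zero)
qed

lemma phi_cont: "\<epsilon> > 0 \<Longrightarrow> continuous_on S (phi x y \<epsilon>)"
  using phi_deriv by (meson DERIV_isCont continuous_at_imp_continuous_on)

lemma key_identity:
  fixes u g :: "real \<Rightarrow> real"
  assumes cu: "continuous_on {0..1} u" and wd: "weak_deriv u g"
    and e: "\<epsilon> > 0" and x: "0 < x" and xy: "x + \<epsilon> \<le> y" and y: "y + \<epsilon> < 1"
  shows "integral {0..1} (\<lambda>t. u t * (Rd ((t - x) / \<epsilon>) / \<epsilon>)) - integral {0..1} (\<lambda>t. u t * (Rd ((t - y) / \<epsilon>) / \<epsilon>))
       = - integral {0..1} (\<lambda>t. g t * phi x y \<epsilon> t)"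
proof -
  define kx where "kx t = Rd ((t - x) / \<epsilon>) / \<epsilon>" for t
  define ky where "ky t = Rd ((t - y) / \<epsilon>) / \<epsilon>" for t
  have ckx: "continuous_on {0..1} kx" unfolding kx_def by (rule Rd_aff_cont[OF e])
  have cky: "continuous_on {0..1} ky" unfolding ky_def by (rule Rd_aff_cont[OF e])
  have tf: "test_fun (phi x y \<epsilon>)" using phi_test[OF e x _ y] xy e by simp
  have dphi: "deriv (phi x y \<epsilon>) t = kx t - ky t" for t
    unfolding kx_def ky_def by (rule DERIV_imp_deriv[OF phi_deriv[OF e]])
  have ga: "g absolutely_integrable_on {0..1}" using wd by (simp add: weak_deriv_def)
  have W: "(LINT t:{0..1}|lebesgue. u t * deriv (phi x y \<epsilon>) t) = - (LINT t:{0..1}|lebesgue. g t * phi x y \<epsilon> t)"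
    using wd tf by (simp add: weak_deriv_def)
  have a1: "(\<lambda>t. u t * deriv (phi x y \<epsilon>) t) absolutely_integrable_on {0..1}"
    unfolding dphi by (rule absolutely_integrable_continuous_real) (intro continuous_intros cu ckx cky)
  have a2': "(\<lambda>t. phi x y \<epsilon> t * g t) absolutely_integrable_on {0..1}"
    by (rule abs_int_cont_mult[OF phi_cont[OF e] ga])
  have a2: "(\<lambda>t. g t * phi x y \<epsilon> t) absolutely_integrable_on {0..1}"
    using a2' by (simp add: mult.commute)
  have "integral {0..1} (\<lambda>t. u t * deriv (phi x y \<epsilon>) t) = - integral {0..1} (\<lambda>t. g t * phi x y \<epsilon> t)"
    using W set_lebesgue_integral_eq_integral(2)[OF a1] set_lebesgue_integral_eq_integral(2)[OF a2] by simp
  moreover have "integral {0..1} (\<lambda>t. u t * deriv (phi x y \<epsilon>) t) = integral {0..1} (\<lambda>t. u t * kx t) - integral {0..1} (\<lambda>t. u t * ky t)"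
  proof -
    have i1: "(\<lambda>t. u t * kx t) integrable_on {0..1}"
      by (rule integrable_continuous_real) (intro continuous_intros cu ckx)
    have i2: "(\<lambda>t. u t * ky t) integrable_on {0..1}"
      by (rule integrable_continuous_real) (intro continuous_intros cu cky)
    have "integral {0..1} (\<lambda>t. u t * deriv (phi x y \<epsilon>) t) = integral {0..1} (\<lambda>t. u t * kx t - u t * ky t)"
      unfolding dphi by (simp add: algebra_simps)
    also have "\<dots> = integral {0..1} (\<lambda>t. u t * kx t) - integral {0..1} (\<lambda>t. u t * ky t)"
      by (rule integral_diff[OF i1 i2])
    finally show ?thesis .
  qed
  ultimately show ?thesis unfolding kx_def ky_def by simp
qed

lemma int_sub01: "h integrable_on {0..1} \<Longrightarrow> 0 \<le> a \<Longrightarrow> b \<le> 1 \<Longrightarrow> h integrable_on {a..b}"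
  for h :: "real \<Rightarrow> real"
  by (rule integrable_subinterval_real) auto

lemma g_bound:
  fixes g :: "real \<Rightarrow> real"
  assumes ga: "g absolutely_integrable_on {0..1}"
    and e: "\<epsilon> > 0" and x: "0 < x" and xy: "x + \<epsilon> \<le> y" and y: "y + \<epsilon> < 1"
  shows "\<bar>integral {0..1} (\<lambda>t. g t * phi x y \<epsilon> t) - integral {x..y} g\<bar>
       \<le> integral {x..x+\<epsilon>} (\<lambda>t. \<bar>g t\<bar>) + integral {y..y+\<epsilon>} (\<lambda>t. \<bar>g t\<bar>)"
proof -
  define p where "p = (\<lambda>t. g t * phi x y \<epsilon> t)"
  have gi: "g integrable_on {0..1}" using ga set_lebesgue_integral_eq_integral(1) by blast
  have gabs: "(\<lambda>t. \<bar>g t\<bar>) integrable_on {0..1}" using ga unfolding absolutely_integrable_on_def by simp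
  have pa: "p absolutely_integrable_on {0..1}"
    using abs_int_cont_mult[OF phi_cont[OF e] ga] by (simp add: p_def mult.commute)
  have pi: "p integrable_on {0..1}" using pa set_lebesgue_integral_eq_integral(1) by blast
  have xy': "x \<le> y" using xy e by simp
  have p0: "\<And>t. t \<le> x \<or> t \<ge> y + \<epsilon> \<Longrightarrow> p t = 0" using phi_zero[OF e xy'] by (simp add: p_def)
  have pg: "\<And>t. x + \<epsilon> \<le> t \<Longrightarrow> t \<le> y \<Longrightarrow> p t = g t" using phi_one[OF e] by (simp add: p_def)
  have pb: "\<And>t. 0 \<le> phi x y \<epsilon> t \<and> phi x y \<epsilon> t \<le> 1" using phi_bounds[OF e xy'] by blast
  have c1: "integral {0..x} p + integral {x..1} p = integral {0..1} p"
    by (rule Henstock_Kurzweil_Integration.integral_combine) (use x y e xy pi in auto)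
  have c2: "integral {x..x+\<epsilon>} p + integral {x+\<epsilon>..1} p = integral {x..1} p"
    by (rule Henstock_Kurzweil_Integration.integral_combine) (use x y e xy in \<open>auto intro: int_sub01[OF pi]\<close>)
  have c3: "integral {x+\<epsilon>..y} p + integral {y..1} p = integral {x+\<epsilon>..1} p"
    by (rule Henstock_Kurzweil_Integration.integral_combine) (use x y e xy in \<open>auto intro: int_sub01[OF pi]\<close>)
  have c4: "integral {y..y+\<epsilon>} p + integral {y+\<epsilon>..1} p = integral {y..1} p"
    by (rule Henstock_Kurzweil_Integration.integral_combine) (use x y e xy in \<open>auto intro: int_sub01[OF pi]\<close>)
  have c5: "integral {x..x+\<epsilon>} g + integral {x+\<epsilon>..y} g = integral {x..y} g"
    by (rule Henstock_Kurzweil_Integration.integral_combine) (use x y e xy in \<open>auto intro: int_sub01[OF gi]\<close>)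
  have z1: "integral {0..x} p = 0"
  proof -
    have "integral {0..x} p = integral {0..x} (\<lambda>t. 0::real)" by (rule integral_cong) (simp add: p0)
    then show ?thesis by simp
  qed
  have z2: "integral {y+\<epsilon>..1} p = 0"
  proof -
    have "integral {y+\<epsilon>..1} p = integral {y+\<epsilon>..1} (\<lambda>t. 0::real)" by (rule integral_cong) (simp add: p0)
    then show ?thesis by simp
  qed
  have z3: "integral {x+\<epsilon>..y} p = integral {x+\<epsilon>..y} g" by (rule integral_cong) (simp add: pg)
  have pix: "p integrable_on {x..x+\<epsilon>}" using x y e xy by (intro int_sub01[OF pi]) auto
  have gix: "g integrable_on {x..x+\<epsilon>}" using x y e xy by (intro int_sub01[OF gi]) auto
  have piy: "p integrable_on {y..y+\<epsilon>}" using x y e xy by (intro int_sub01[OF pi]) auto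
  have aix: "(\<lambda>t. \<bar>g t\<bar>) integrable_on {x..x+\<epsilon>}" using x y e xy by (intro int_sub01[OF gabs]) auto
  have aiy: "(\<lambda>t. \<bar>g t\<bar>) integrable_on {y..y+\<epsilon>}" using x y e xy by (intro int_sub01[OF gabs]) auto
  have dif: "integral {0..1} p - integral {x..y} g = integral {x..x+\<epsilon>} (\<lambda>t. p t - g t) + integral {y..y+\<epsilon>} p"
    using c1 c2 c3 c4 c5 z1 z2 z3 integral_diff[OF pix gix] by linarith
  have b1: "norm (integral {x..x+\<epsilon>} (\<lambda>t. p t - g t)) \<le> integral {x..x+\<epsilon>} (\<lambda>t. \<bar>g t\<bar>)"
  proof (rule Henstock_Kurzweil_Integration.integral_norm_bound_integral)
    show "(\<lambda>t. p t - g t) integrable_on {x..x+\<epsilon>}" by (rule integrable_diff[OF pix gix])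
    show "(\<lambda>t. \<bar>g t\<bar>) integrable_on {x..x+\<epsilon>}" by (rule aix)
    fix t
    have "\<bar>p t - g t\<bar> = \<bar>g t\<bar> * \<bar>phi x y \<epsilon> t - 1\<bar>" by (simp add: p_def abs_mult[symmetric] algebra_simps)
    also have "\<dots> \<le> \<bar>g t\<bar> * 1" using pb[of t] by (intro mult_left_mono) auto
    finally show "norm (p t - g t) \<le> \<bar>g t\<bar>" by simp
  qed
  have b2: "norm (integral {y..y+\<epsilon>} p) \<le> integral {y..y+\<epsilon>} (\<lambda>t. \<bar>g t\<bar>)"
  proof (rule Henstock_Kurzweil_Integration.integral_norm_bound_integral[OF piy aiy])
    fix t
    have "\<bar>p t\<bar> = \<bar>g t\<bar> * \<bar>phi x y \<epsilon> t\<bar>" by (simp add: p_def abs_mult)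
    also have "\<dots> \<le> \<bar>g t\<bar> * 1" using pb[of t] by (intro mult_left_mono) auto
    finally show "norm (p t) \<le> \<bar>g t\<bar>" by simp
  qed
  show ?thesis using dif b1 b2 unfolding p_def[symmetric] by simp
qed

lemma FTC_inner:
  fixes u g :: "real \<Rightarrow> real"
  assumes cu: "continuous_on {0..1} u" and wd: "weak_deriv u g"
    and x: "0 < x" and xy: "x < y" and y: "y < 1"
  shows "u y - u x = integral {x..y} g"
proof -
  have ga: "g absolutely_integrable_on {0..1}" using wd by (simp add: weak_deriv_def)
  have gabs: "(\<lambda>t. \<bar>g t\<bar>) integrable_on {0..1}" using ga unfolding absolutely_integrable_on_def by simp
  define Ga where "Ga t = integral {0..t} (\<lambda>t. \<bar>g t\<bar>)" for t
  have cGa: "continuous_on {0..1} Ga" unfolding Ga_def by (rule indefinite_integral_continuous_1[OF gabs])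
  have ucu: "uniformly_continuous_on {0..1} u" by (rule compact_uniformly_continuous[OF cu]) simp
  have ucG: "uniformly_continuous_on {0..1} Ga" by (rule compact_uniformly_continuous[OF cGa]) simp
  define D where "D = u y - u x - integral {x..y} g"
  have main: "\<bar>D\<bar> \<le> 4 * \<eta>" if eta: "\<eta> > 0" for \<eta>
  proof -
    obtain d1 where d1: "d1 > 0" "\<And>a b. a \<in> {0..1} \<Longrightarrow> b \<in> {0..1} \<Longrightarrow> dist b a < d1 \<Longrightarrow> dist (u b) (u a) < \<eta>"
      using ucu eta unfolding uniformly_continuous_on_def by metis
    obtain d2 where d2: "d2 > 0" "\<And>a b. a \<in> {0..1} \<Longrightarrow> b \<in> {0..1} \<Longrightarrow> dist b a < d2 \<Longrightarrow> dist (Ga b) (Ga a) < \<eta>"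
      using ucG eta unfolding uniformly_continuous_on_def by metis
    define \<epsilon> where "\<epsilon> = min (min d1 d2 / 2) (min (y - x) ((1 - y) / 2))"
    have e: "\<epsilon> > 0" using d1 d2 xy y by (simp add: \<epsilon>_def)
    have ed1: "\<epsilon> < d1" and ed2: "\<epsilon> < d2" using d1 d2 by (auto simp: \<epsilon>_def)
    have e1: "\<epsilon> \<le> y - x" and e2: "\<epsilon> \<le> (1 - y) / 2" unfolding \<epsilon>_def by linarith+
    have exy: "x + \<epsilon> \<le> y" using e1 by linarith
    have ey: "y + \<epsilon> < 1" using e2 \<open>y < 1\<close> by (simp add: field_simps)
    have close: "\<bar>u t - u z\<bar> \<le> \<eta>" if "z \<in> {x, y}" "t \<in> {z..z+\<epsilon>}" for z t
    proof -
      have "z \<in> {0..1}" "t \<in> {0..1}" using that x xy y ey exy e by auto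
      moreover have "dist t z < d1" using that ed1 by (auto simp: dist_real_def)
      ultimately have "dist (u t) (u z) < \<eta>" by (rule d1(2))
      then show ?thesis by (simp add: dist_real_def)
    qed
    have mx: "\<bar>integral {0..1} (\<lambda>t. u t * (Rd ((t - x) / \<epsilon>) / \<epsilon>)) - u x\<bar> \<le> \<eta>"
      by (rule moll_bound[OF cu e]) (use x exy ey e close in auto)
    have my: "\<bar>integral {0..1} (\<lambda>t. u t * (Rd ((t - y) / \<epsilon>) / \<epsilon>)) - u y\<bar> \<le> \<eta>"
      by (rule moll_bound[OF cu e]) (use x xy ey close in auto)
    have key: "integral {0..1} (\<lambda>t. u t * (Rd ((t - x) / \<epsilon>) / \<epsilon>)) - integral {0..1} (\<lambda>t. u t * (Rd ((t - y) / \<epsilon>) / \<epsilon>))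
       = - integral {0..1} (\<lambda>t. g t * phi x y \<epsilon> t)"
      by (rule key_identity[OF cu wd e x exy ey])
    have gb: "\<bar>integral {0..1} (\<lambda>t. g t * phi x y \<epsilon> t) - integral {x..y} g\<bar>
       \<le> integral {x..x+\<epsilon>} (\<lambda>t. \<bar>g t\<bar>) + integral {y..y+\<epsilon>} (\<lambda>t. \<bar>g t\<bar>)"
      by (rule g_bound[OF ga e x exy ey])
    have small: "integral {z..z+\<epsilon>} (\<lambda>t. \<bar>g t\<bar>) \<le> \<eta>" if "z \<in> {x, y}" for z
    proof -
      have z: "0 \<le> z" "z + \<epsilon> \<le> 1" using that x xy y ey exy e by auto
      have "integral {0..z} (\<lambda>t. \<bar>g t\<bar>) + integral {z..z+\<epsilon>} (\<lambda>t. \<bar>g t\<bar>) = Ga (z + \<epsilon>)"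
        unfolding Ga_def
        by (rule Henstock_Kurzweil_Integration.integral_combine) (use z e in \<open>auto intro: int_sub01[OF gabs]\<close>)
      then have "integral {z..z+\<epsilon>} (\<lambda>t. \<bar>g t\<bar>) = Ga (z + \<epsilon>) - Ga z" by (simp add: Ga_def)
      moreover have "dist (Ga (z + \<epsilon>)) (Ga z) < \<eta>"
        by (rule d2(2)) (use z e ed2 in \<open>auto simp: dist_real_def\<close>)
      ultimately show ?thesis by (simp add: dist_real_def)
    qed
    have sx: "integral {x..x+\<epsilon>} (\<lambda>t. \<bar>g t\<bar>) \<le> \<eta>" using small by simp
    have sy: "integral {y..y+\<epsilon>} (\<lambda>t. \<bar>g t\<bar>) \<le> \<eta>" using small by simp
    have A1: "\<bar>(u y - integral {0..1} (\<lambda>t. u t * (Rd ((t - y) / \<epsilon>) / \<epsilon>)))\<bar> \<le> \<eta>" using my by simp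
    have A2: "\<bar>(integral {0..1} (\<lambda>t. u t * (Rd ((t - x) / \<epsilon>) / \<epsilon>)) - u x)\<bar> \<le> \<eta>" using mx by simp
    have "D = (u y - integral {0..1} (\<lambda>t. u t * (Rd ((t - y) / \<epsilon>) / \<epsilon>)))
       + (integral {0..1} (\<lambda>t. u t * (Rd ((t - x) / \<epsilon>) / \<epsilon>)) - u x)
       + (integral {0..1} (\<lambda>t. g t * phi x y \<epsilon> t) - integral {x..y} g)"
      unfolding D_def using key by simp
    also have "\<bar>\<dots>\<bar> \<le> \<eta> + \<eta> + 2 * \<eta>"
      by (rule order.trans[OF abs_triangle_ineq], rule add_mono, rule order.trans[OF abs_triangle_ineq], rule add_mono)
         (use A1 A2 gb sx sy in auto)
    finally show ?thesis by simp
  qed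
  have "D = 0"
  proof (rule ccontr)
    assume "D \<noteq> 0"
    then have "\<bar>D\<bar> \<le> 4 * (\<bar>D\<bar> / 8)" using main[of "\<bar>D\<bar> / 8"] by simp
    then show False using \<open>D \<noteq> 0\<close> by simp
  qed
  then show ?thesis by (simp add: D_def)
qed

lemma FTC_weak:
  fixes u g :: "real \<Rightarrow> real"
  assumes cu: "continuous_on {0..1} u" and wd: "weak_deriv u g"
  shows "AC u g"
proof -
  have ga: "g absolutely_integrable_on {0..1}" using wd by (simp add: weak_deriv_def)
  have gi: "g integrable_on {0..1}" using ga set_lebesgue_integral_eq_integral(1) by blast
  define V where "V t = u t - integral {0..t} g" for t
  have cV: "continuous_on {0..1} V" unfolding V_def
    by (intro continuous_intros cu indefinite_integral_continuous_1 gi)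
  have Vc: "V t = V (1/2)" if t: "t \<in> {0<..<1}" for t
  proof -
    have gen: "V b = V a" if "0 < a" "a < b" "b < 1" for a b
    proof -
      have "u b - u a = integral {a..b} g" by (rule FTC_inner[OF cu wd]) (use that in auto)
      moreover have "integral {0..a} g + integral {a..b} g = integral {0..b} g"
        by (rule Henstock_Kurzweil_Integration.integral_combine) (use that in \<open>auto intro: int_sub01[OF gi]\<close>)
      ultimately show ?thesis by (simp add: V_def)
    qed
    consider "t < 1/2" | "t = 1/2" | "t > 1/2" by linarith
    then show ?thesis
    proof cases
      case 1 then show ?thesis using gen[of t "1/2"] t by simp
    next
      case 2 then show ?thesis by (simp only:)
    next
      case 3 then show ?thesis using gen[of "1/2" t] t by simp
    qed
  qed
  have cl: "closure {0<..<1::real} = {0..1}" by simp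
  have VV: "V t = V (1/2)" if "t \<in> {0..1}" for t
  proof (rule continuous_constant_on_closure[of "{0<..<1}" V "V (1/2)" t])
    show "continuous_on (closure {0<..<1}) V" unfolding cl by (rule cV)
    show "\<And>x. x \<in> {0<..<1} \<Longrightarrow> V x = V (1 / 2)" by (rule Vc)
    show "t \<in> closure {0<..<1}" unfolding cl by (rule that)
  qed
  have V0: "V 0 = u 0" by (simp add: V_def)
  have U: "u t = u 0 + integral {0..t} g" if "t \<in> {0..1}" for t
  proof -
    have "V t = V 0" using VV[OF that] VV[of 0] by (metis atLeastAtMost_iff order_refl zero_le_one)
    then show ?thesis using V0 by (simp add: V_def)
  qed
  show ?thesis unfolding AC_def using ga U by blast
qed

lemma sbm_of_abs: "f absolutely_integrable_on S \<Longrightarrow> set_borel_measurable lebesgue S f"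
  unfolding set_integrable_def set_borel_measurable_def by auto

lemma L2_cont: "continuous_on {0..1} f \<Longrightarrow> L2 f"
  unfolding L2_def
proof
  assume c: "continuous_on {0..1} f"
  show "set_borel_measurable lebesgue {0..1} f" by (rule sbm_of_abs[OF absolutely_integrable_continuous_real[OF c]])
  show "set_integrable lebesgue {0..1} (\<lambda>x. (f x)\<^sup>2)"
    by (rule absolutely_integrable_continuous_real) (intro continuous_intros c)
qed

lemma Linf_L2:
  assumes "Linf f" shows "L2 f"
proof -
  obtain M where m: "set_borel_measurable lebesgue {0..1} f"
    and b: "AE x in lebesgue. x \<in> {0..1} \<longrightarrow> \<bar>f x\<bar> \<le> M"
    using assms unfolding Linf_def by blast
  define f' where "f' x = indicator {0..1::real} x * f x" for x
  have mf': "f' \<in> borel_measurable lebesgue" using m by (simp add: set_borel_measurable_def f'_def[abs_def])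
  have msq: "(\<lambda>x. (f' x)^2) \<in> borel_measurable lebesgue" using mf' by measurable
  have "integrable lebesgue (\<lambda>x. indicator {0..1::real} x *\<^sub>R (f' x)^2)"
  proof (rule integrableI_bounded_set_indicator[where B="M^2"])
    show "{0..1::real} \<in> sets lebesgue" by simp
    show "(\<lambda>x. (f' x)^2) \<in> borel_measurable lebesgue" by (rule msq)
    show "emeasure lebesgue {0..1::real} < \<infinity>" by simp
    show "AE x in lebesgue. x \<in> {0..1} \<longrightarrow> norm ((f' x)^2) \<le> M^2"
      using b
    proof eventually_elim
      case (elim x)
      show ?case
      proof
        assume x: "x \<in> {0..1}"
        then have "\<bar>f x\<bar> \<le> M" using elim by blast
        then have "\<bar>f x\<bar>^2 \<le> M^2" by (intro power_mono) auto
        moreover have "norm ((f' x)^2) = \<bar>f x\<bar>^2" using x by (simp add: f'_def)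
        ultimately show "norm ((f' x)^2) \<le> M^2" by simp
      qed
    qed
  qed
  moreover have "(\<lambda>x. indicator {0..1::real} x *\<^sub>R (f' x)^2) = (\<lambda>x. indicator {0..1} x *\<^sub>R (f x)^2)"
    by (auto simp: f'_def indicator_def fun_eq_iff)
  ultimately show ?thesis using m by (simp add: L2_def set_integrable_def)
qed

lemma L2_abs: "L2 f \<Longrightarrow> (\<lambda>x. (f x)^2) absolutely_integrable_on {0..1}"
  by (simp add: L2_def)

lemma H1_prod:
  fixes a a' g g2 :: "real \<Rightarrow> real"
  assumes ca: "continuous_on {0..1} a" and wa: "weak_deriv a a'" and la: "Linf a'"
    and cg: "continuous_on {0..1} g" and wg: "weak_deriv g g2" and lg: "L2 g2"
  shows "H1 (\<lambda>x. a x * g x)"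
proof -
  have A: "AC a a'" by (rule FTC_weak[OF ca wa])
  have G: "AC g g2" by (rule FTC_weak[OF cg wg])
  have P: "AC (\<lambda>t. a t * g t) (\<lambda>t. a' t * g t + a t * g2 t)" by (rule PR[OF A G])
  have W: "weak_deriv (\<lambda>t. a t * g t) (\<lambda>t. a' t * g t + a t * g2 t)" by (rule WD[OF P])
  have ch: "continuous_on {0..1} (\<lambda>x. a x * g x)" by (intro continuous_intros ca cg)
  have kabs: "(\<lambda>t. a' t * g t + a t * g2 t) absolutely_integrable_on {0..1}" using P by (simp add: AC_def)
  have Lk: "L2 (\<lambda>t. a' t * g t + a t * g2 t)"
    unfolding L2_def
  proof
    show "set_borel_measurable lebesgue {0..1} (\<lambda>t. a' t * g t + a t * g2 t)" by (rule sbm_of_abs[OF kabs])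
    have s1: "(\<lambda>t. (g t)^2 * (a' t)^2) absolutely_integrable_on {0..1}"
      by (rule abs_int_cont_mult[OF _ L2_abs[OF Linf_L2[OF la]]]) (intro continuous_intros cg)
    have s2: "(\<lambda>t. (a t)^2 * (g2 t)^2) absolutely_integrable_on {0..1}"
      by (rule abs_int_cont_mult[OF _ L2_abs[OF lg]]) (intro continuous_intros ca)
    have s12: "(\<lambda>t. 2 * ((g t)^2 * (a' t)^2) + 2 * ((a t)^2 * (g2 t)^2)) absolutely_integrable_on {0..1}"
      using set_integral_add(1)[OF set_integrable_mult_right[OF s1, of 2] set_integrable_mult_right[OF s2, of 2]] by simp
    have mk: "set_borel_measurable lebesgue {0..1} (\<lambda>t. (a' t * g t + a t * g2 t)^2)"
    proof -
      have "(\<lambda>x. indicator {0..1::real} x *\<^sub>R (a' x * g x + a x * g2 x)) \<in> borel_measurable lebesgue"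
        using sbm_of_abs[OF kabs] by (simp add: set_borel_measurable_def)
      then have "(\<lambda>x. (indicator {0..1::real} x *\<^sub>R (a' x * g x + a x * g2 x))^2) \<in> borel_measurable lebesgue"
        by measurable
      moreover have "(\<lambda>x. (indicator {0..1::real} x *\<^sub>R (a' x * g x + a x * g2 x))^2)
          = (\<lambda>x. indicator {0..1::real} x *\<^sub>R (a' x * g x + a x * g2 x)^2)"
        by (auto simp: indicator_def fun_eq_iff)
      ultimately show ?thesis by (simp add: set_borel_measurable_def)
    qed
    show "set_integrable lebesgue {0..1} (\<lambda>x. (a' x * g x + a x * g2 x)\<^sup>2)"
      unfolding set_integrable_def
    proof (rule Bochner_Integration.integrable_bound[OF s12[unfolded set_integrable_def]])
      show "(\<lambda>x. indicator {0..1} x *\<^sub>R (a' x * g x + a x * g2 x)\<^sup>2) \<in> borel_measurable lebesgue"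
        using mk by (simp add: set_borel_measurable_def)
      show "AE x in lebesgue. norm (indicator {0..1} x *\<^sub>R (a' x * g x + a x * g2 x)\<^sup>2)
          \<le> norm (indicator {0..1} x *\<^sub>R (2 * ((g x)\<^sup>2 * (a' x)\<^sup>2) + 2 * ((a x)\<^sup>2 * (g2 x)\<^sup>2)))"
      proof (rule AE_I2)
        fix x
        have "(a' x * g x + a x * g2 x)^2 \<le> 2 * ((g x)\<^sup>2 * (a' x)\<^sup>2) + 2 * ((a x)\<^sup>2 * (g2 x)\<^sup>2)"
        proof -
          have "0 \<le> (a' x * g x - a x * g2 x)^2" by simp
          then show ?thesis by (simp add: power2_eq_square algebra_simps)
        qed
        then show "norm (indicator {0..1} x *\<^sub>R (a' x * g x + a x * g2 x)\<^sup>2)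
          \<le> norm (indicator {0..1} x *\<^sub>R (2 * ((g x)\<^sup>2 * (a' x)\<^sup>2) + 2 * ((a x)\<^sup>2 * (g2 x)\<^sup>2)))"
          by (auto simp: indicator_def)
      qed
    qed
  qed
  show ?thesis unfolding H1_def using ch L2_cont[OF ch] Lk W by blast
qed

lemma int_bound_AE:
  fixes f :: "real \<Rightarrow> real"
  assumes fa: "f absolutely_integrable_on {0..1}" and b: "AE x in lebesgue. x \<in> {0..1} \<longrightarrow> \<bar>f x\<bar> \<le> M"
    and st: "0 \<le> s" "s \<le> t" "t \<le> 1"
  shows "integral {s..t} f \<le> (t - s) * M"
proof -
  have fs: "f absolutely_integrable_on {s..t}" by (rule absolutely_integrable_on_subinterval[OF fa]) (use st in auto)
  have cs: "(\<lambda>x. M) absolutely_integrable_on {s..t}" by (rule absolutely_integrable_continuous_real) simp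
  have "(\<integral>x. indicator {s..t} x * f x \<partial>lebesgue) \<le> (\<integral>x. indicator {s..t} x * M \<partial>lebesgue)"
  proof (rule integral_mono_AE[OF set_int_hk_int[OF fs] set_int_hk_int[OF cs]])
    show "AE x in lebesgue. indicator {s..t} x * f x \<le> indicator {s..t} x * M"
      using b
    proof eventually_elim
      case (elim x)
      show ?case
      proof (cases "x \<in> {s..t}")
        case True then have "x \<in> {0..1}" using st by auto
        then show ?thesis using elim True by auto
      qed simp
    qed
  qed
  then show ?thesis using set_int_hk[OF fs] set_int_hk[OF cs] st by simp
qed

lemma zero_at_x0:
  fixes a u :: "real \<Rightarrow> real"
  assumes sd: "SD a x0 K" and uh: "u \<in> H1_w a"
  shows "u x0 = 0"
proof (rule ccontr)
  assume nz: "u x0 \<noteq> 0"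
  have x0: "0 < x0" "x0 < 1" and ax0: "a x0 = 0" and apos: "\<And>x. x \<in> {0..1} - {x0} \<Longrightarrow> a x > 0"
    using sd by (auto simp: SD_def)
  have ca: "continuous_on {0..1} a" using sd by (simp add: SD_def W1inf_def)
  obtain a' where wa: "weak_deriv a a'" and la: "Linf a'" using sd by (auto simp: SD_def)
  obtain M where Mb: "AE x in lebesgue. x \<in> {0..1} \<longrightarrow> \<bar>a' x\<bar> \<le> M" using la by (auto simp: Linf_def)
  define M' where "M' = max M 1"
  have M'b: "AE x in lebesgue. x \<in> {0..1} \<longrightarrow> \<bar>a' x\<bar> \<le> M'" using Mb by eventually_elim (auto simp: M'_def)
  have M'pos: "M' > 0" by (simp add: M'_def)
  have A: "AC a a'" by (rule FTC_weak[OF ca wa])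
  have a'a: "a' absolutely_integrable_on {0..1}" using A by (simp add: AC_def)
  have a'i: "a' integrable_on {0..1}" using a'a set_lebesgue_integral_eq_integral(1) by blast
  have lip: "a t \<le> M' * (t - x0)" if t: "x0 \<le> t" "t \<le> 1" for t
  proof -
    have t01: "t \<in> {0..1}" "x0 \<in> {0..1}" using t x0 by auto
    have e1: "a t = a 0 + integral {0..t} a'" using A t01(1) unfolding AC_def by blast
    have e2: "a x0 = a 0 + integral {0..x0} a'" using A t01(2) unfolding AC_def by blast
    have e3: "integral {0..x0} a' + integral {x0..t} a' = integral {0..t} a'"
      by (rule Henstock_Kurzweil_Integration.integral_combine) (use t x0 in \<open>auto intro: int_sub01[OF a'i]\<close>)
    have "integral {x0..t} a' \<le> (t - x0) * M'" by (rule int_bound_AE[OF a'a M'b]) (use t x0 in auto)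
    then show ?thesis using e1 e2 e3 ax0 by (simp add: mult.commute)
  qed
  have uc: "continuous_on {0..1} u" using uh by (simp add: H1_w_def H1_0_def H1_def)
  have qa: "(\<lambda>x. (u x)^2 / a x) absolutely_integrable_on {0..1}" using uh by (simp add: H1_w_def L2_w_def)
  have qi: "(\<lambda>x. (u x)^2 / a x) integrable_on {0..1}" using qa set_lebesgue_integral_eq_integral(1) by blast
  have anonneg: "a x \<ge> 0" if "x \<in> {0..1}" for x using apos[of x] ax0 that by (cases "x = x0") auto
  have qnn: "(u x)^2 / a x \<ge> 0" if "x \<in> {0..1}" for x using anonneg[OF that] by simp
  define c where "c = (u x0)^2 / 2"
  have cpos: "c > 0" using nz by (simp add: c_def)
  have usq: "uniformly_continuous_on {0..1} (\<lambda>t. (u t)^2)"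
    by (rule compact_uniformly_continuous) (intro continuous_intros uc, simp)
  obtain \<delta> where \<delta>: "\<delta> > 0" "\<And>s t. s \<in> {0..1} \<Longrightarrow> t \<in> {0..1} \<Longrightarrow> dist t s < \<delta> \<Longrightarrow> dist ((u t)^2) ((u s)^2) < c"
    using usq cpos unfolding uniformly_continuous_on_def by metis
  define d where "d = min (\<delta> / 2) ((1 - x0) / 2)"
  have dpos: "d > 0" using \<delta> x0 by (simp add: d_def)
  have d1: "d \<le> \<delta> / 2" "d \<le> (1 - x0) / 2" unfolding d_def by (rule min.cobounded1, rule min.cobounded2)
  have dd: "d < \<delta>" "x0 + d < 1" using d1 \<delta> x0 by (simp_all add: field_simps)
  define J where "J = integral {0..1} (\<lambda>x. (u x)^2 / a x)"
  define \<eta> where "\<eta> = d * exp (- (J * M' / c) - 1)"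
  have etapos: "\<eta> > 0" using dpos by (simp add: \<eta>_def)
  have etad: "\<eta> < d"
  proof -
    have "J \<ge> 0" unfolding J_def by (rule integral_nonneg[OF qi]) (use qnn in auto)
    then have "J * M' / c \<ge> 0" using M'pos cpos by simp
    then have "- (J * M' / c) - 1 < 0" by linarith
    then have "exp (- (J * M' / c) - 1) < 1" by simp
    then show ?thesis using dpos by (simp add: \<eta>_def)
  qed
  define S where "S = {x0 + \<eta> .. x0 + d}"
  have Ssub: "S \<subseteq> {0..1}" using x0 etapos dd by (auto simp: S_def)
  have low: "c / (M' * (t - x0)) \<le> (u t)^2 / a t" if t: "t \<in> S" for t
  proof -
    have t1: "t \<in> {0..1}" "t \<noteq> x0" "t > x0" using t Ssub etapos by (auto simp: S_def)
    have at: "a t > 0" using apos t1 by auto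
    have "dist ((u t)^2) ((u x0)^2) < c"
      by (rule \<delta>(2)) (use t1 x0 t dd in \<open>auto simp: S_def dist_real_def\<close>)
    then have uc': "(u t)^2 \<ge> c" unfolding c_def dist_real_def by linarith
    have al: "a t \<le> M' * (t - x0)" using lip t1 by auto
    have "c / (M' * (t - x0)) \<le> c / a t" using at al cpos by (intro divide_left_mono) auto
    also have "\<dots> \<le> (u t)^2 / a t" using uc' at by (intro divide_right_mono) auto
    finally show ?thesis .
  qed
  have F: "((\<lambda>t. c / M' / (t - x0)) has_integral (c / M' * ln d - c / M' * ln \<eta>)) S"
  proof -
    have "((\<lambda>t. c / M' / (t - x0)) has_integral (c / M' * ln (x0 + d - x0) - c / M' * ln (x0 + \<eta> - x0))) S"
      unfolding S_def
    proof (rule fundamental_theorem_of_calculus)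
      show "x0 + \<eta> \<le> x0 + d" using etad by simp
      fix t assume t: "t \<in> {x0 + \<eta>..x0 + d}"
      then have "t - x0 > 0" using etapos by auto
      then have "DERIV (\<lambda>t. c / M' * ln (t - x0)) t :> c / M' * (1 / (t - x0))"
        using M'pos by (auto intro!: derivative_eq_intros)
      then show "((\<lambda>t. c / M' * ln (t - x0)) has_vector_derivative c / M' / (t - x0)) (at t within {x0 + \<eta>..x0 + d})"
        by (simp add: has_real_derivative_iff_has_vector_derivative[symmetric] has_field_derivative_at_within)
    qed
    then show ?thesis by simp
  qed
  have lneta: "ln \<eta> = ln d - J * M' / c - 1" using dpos by (simp add: \<eta>_def ln_mult)
  have Fv: "c / M' * ln d - c / M' * ln \<eta> = J + c / M'"
    using M'pos cpos by (simp add: lneta field_simps)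
  have "J + c / M' \<le> integral S (\<lambda>t. (u t)^2 / a t)"
  proof -
    have "integral S (\<lambda>t. c / M' / (t - x0)) \<le> integral S (\<lambda>t. (u t)^2 / a t)"
    proof (rule integral_le)
      show "(\<lambda>t. c / M' / (t - x0)) integrable_on S" using F by blast
      show "(\<lambda>t. (u t)^2 / a t) integrable_on S" unfolding S_def
        by (rule int_sub01[OF qi]) (use x0 etapos dd in auto)
      fix t assume "t \<in> S" then show "c / M' / (t - x0) \<le> (u t)^2 / a t" using low by (simp add: divide_divide_eq_left)
    qed
    then show ?thesis using F Fv by (simp add: integral_unique)
  qed
  also have "\<dots> \<le> J" unfolding J_def
  proof (rule integral_subset_le[OF Ssub])
    show "(\<lambda>t. (u t)^2 / a t) integrable_on S" unfolding S_def
      by (rule int_sub01[OF qi]) (use x0 etapos dd in auto)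
    show "(\<lambda>t. (u t)^2 / a t) integrable_on {0..1}" by (rule qi)
    show "\<forall>x\<in>{0..1}. 0 \<le> (u x)^2 / a x" using qnn by auto
  qed
  finally have "c / M' \<le> 0" by simp
  moreover have "c / M' > 0" using M'pos cpos by simp
  ultimately show False by linarith
qed

theorem proposition2p5:
  fixes a :: "real \<Rightarrow> real" and x0 K :: real
  assumes "SD a x0 K"
  shows "dom_A2 a = H2_w a \<and> H2_w a = D_set a x0"
proof
  show "dom_A2 a = H2_w a" by (simp add: dom_A2_def)
  show "H2_w a = D_set a x0"
  proof
    show "D_set a x0 \<subseteq> H2_w a" by (auto simp: D_set_def)
    show "H2_w a \<subseteq> D_set a x0"
    proof
      fix u assume u: "u \<in> H2_w a"
      then have uh: "u \<in> H1_w a" by (simp add: H2_w_def)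
      obtain g where wg: "weak_deriv u g" and hg: "H1 g" using u by (auto simp: H2_w_def)
      have cg: "continuous_on {0..1} g" using hg by (simp add: H1_def)
      obtain g2 where lg2: "L2 g2" and wg2: "weak_deriv g g2" using hg by (auto simp: H1_def)
      have ca: "continuous_on {0..1} a" using assms by (simp add: SD_def W1inf_def)
      obtain a' where wa: "weak_deriv a a'" and la: "Linf a'" using assms by (auto simp: SD_def)
      have ax0: "a x0 = 0" using assms by (simp add: SD_def)
      have hh: "H1 (\<lambda>x. a x * g x)" by (rule H1_prod[OF ca wa la cg wg2 lg2])
      have u0: "u x0 = 0" by (rule zero_at_x0[OF assms uh])
      have ae: "AE x in lebesgue. x \<in> {0..1} \<longrightarrow> (\<lambda>x. a x * g x) x = a x * g x" by simp
      show "u \<in> D_set a x0" unfolding D_set_def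
        using u u0 wg hh ae ax0 by (intro CollectI conjI exI[of _ g] exI[of _ "\<lambda>x. a x * g x"]) auto
    qed
  qed
qed

end
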